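(* Assume the setting described in the context. Among measures $\mu\in\mathcal M_{+,T_0}(V\times\mathcal S_{T_0})$ of the form $\mu=\mu_tdt$, the unique weak solution of $\partial_t\mu_t+\mathrm{div}\,Q^\mu_t=0$ is $\mu=\pi$. Here $Q^\mu_t(y,z)=\mu_t(y)r(y,z;t)$, and "weak solution" means $\int_0^{T_0}\sum_y\mu_s(y)\partial_sf(y,s)ds=\int_0^{T_0}\sum_y\mathrm{div}\,Q^\mu_s(y)f(y,s)ds$ for every $f:V\times\mathcal S_{T_0}\to\mathbb R$ that is $C^1$ in time.
   Context: Let $V$ be a finite set, $T_0>0$, $\mathcal S_{T_0}=\mathbb R/T_0\mathbb Z$ (functions on it identified with $T_0$-periodic functions). For $y,z\in V$, $r(y,z;\cdot):[0,\infty)\to[0,\infty)$ is measurable, locally integrable and $T_0$-periodic, $r(x,x;\cdot)=0$; $E$ is the set of $(y,z)$, $y\ne z$, with $r(y,z;t)>0$ for all $t>0$. Assume (A1) if $r(y,z;t)>0$ for some $t>0$ then for all $t>0$; (A2) the directed graph $(V,E)$ is strongly connected. $(\xi_t)$ is the time-inhomogeneous Markov chain on $V$ with jump rates $r(y,z;t)$. $\pi_0$ is the unique invariant distribution of $(\xi_{nT_0})_{n\ge0}$, $\pi_t$ the law of $\xi_t$ when $\xi_0\sim\pi_0$, and $\pi:=\pi_tdt$. $\mathcal M_{+,T_0}(V\times\mathcal S_{T_0})$ is the set of nonnegative measures on $V\times\mathcal S_{T_0}$ with total mass $T_0$. $\mathrm{div}A(y)=\sum_zA(y,z)-\sum_zA(z,y)$.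 *)

theory Defs
  imports "HOL-Analysis.Analysis"
begin

text \<open>Jump rates r y z t, only the values for t \<ge> 0 are relevant.\<close>

definition rate_edge :: "('v \<Rightarrow> 'v \<Rightarrow> real \<Rightarrow> real) \<Rightarrow> 'v \<Rightarrow> 'v \<Rightarrow> bool" where
  "rate_edge r y z \<longleftrightarrow> y \<noteq> z \<and> (\<forall>t>0. r y z t > 0)"

definition rate_assms :: "real \<Rightarrow> ('v::finite \<Rightarrow> 'v \<Rightarrow> real \<Rightarrow> real) \<Rightarrow> bool" where
  "rate_assms T0 r \<longleftrightarrow> T0 > 0
     \<and> (\<forall>y z t. 0 \<le> t \<longrightarrow> 0 \<le> r y z t)
     \<and> (\<forall>y z. set_borel_measurable lborel {0..} (r y z))
     \<and> (\<forall>y z b. 0 \<le> b \<longrightarrow> set_integrable lborel {0..b} (r y z))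
     \<and> (\<forall>y z t. 0 \<le> t \<longrightarrow> r y z (t + T0) = r y z t)
     \<and> (\<forall>x t. r x x t = 0)"

definition rate_A1 :: "('v \<Rightarrow> 'v \<Rightarrow> real \<Rightarrow> real) \<Rightarrow> bool" where
  "rate_A1 r \<longleftrightarrow> (\<forall>y z. (\<exists>t>0. r y z t > 0) \<longrightarrow> (\<forall>t>0. r y z t > 0))"

definition rate_A2 :: "('v \<Rightarrow> 'v \<Rightarrow> real \<Rightarrow> real) \<Rightarrow> bool" where
  "rate_A2 r \<longleftrightarrow> (\<forall>y z. (y, z) \<in> {(a, b). rate_edge r a b}\<^sup>*)"

definition gen :: "('v::finite \<Rightarrow> 'v \<Rightarrow> real \<Rightarrow> real) \<Rightarrow> real \<Rightarrow> 'v \<Rightarrow> 'v \<Rightarrow> real" where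
  "gen r s y z = r y z s - (if y = z then (\<Sum>w\<in>UNIV. r y w s) else 0)"

text \<open>P t x z = probability that the chain started at x at time 0 is in z at time t,
  characterised as the solution of the Kolmogorov forward equation (integral form).\<close>
definition is_transition_from0 ::
  "('v::finite \<Rightarrow> 'v \<Rightarrow> real \<Rightarrow> real) \<Rightarrow> (real \<Rightarrow> 'v \<Rightarrow> 'v \<Rightarrow> real) \<Rightarrow> bool" where
  "is_transition_from0 r P \<longleftrightarrow>
     (\<forall>x z t. 0 \<le> t \<longrightarrow>
        set_integrable lborel {0..t} (\<lambda>s. \<Sum>y\<in>UNIV. P s x y * gen r s y z)
      \<and> P t x z = (if x = z then 1 else 0)
                  + (LINT s:{0..t}|lborel. (\<Sum>y\<in>UNIV. P s x y * gen r s y z)))"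

definition divQ :: "('v::finite \<Rightarrow> 'v \<Rightarrow> real \<Rightarrow> real) \<Rightarrow> ('v \<Rightarrow> real \<Rightarrow> real) \<Rightarrow> real \<Rightarrow> 'v \<Rightarrow> real" where
  "divQ r \<mu> s y = (\<Sum>z\<in>UNIV. \<mu> y s * r y z s) - (\<Sum>z\<in>UNIV. \<mu> z s * r z y s)"

text \<open>Measures mu = mu_t dt in M_{+,T0}(V x S_T0), given by a density mu y t on [0,T0].\<close>
definition in_M_plus :: "real \<Rightarrow> ('v::finite \<Rightarrow> real \<Rightarrow> real) \<Rightarrow> bool" where
  "in_M_plus T0 \<mu> \<longleftrightarrow>
     (\<forall>y. set_borel_measurable lborel {0..T0} (\<mu> y))
   \<and> (\<forall>y t. t \<in> {0..T0} \<longrightarrow> 0 \<le> \<mu> y t)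
   \<and> (\<forall>y. set_integrable lborel {0..T0} (\<mu> y))
   \<and> (LINT t:{0..T0}|lborel. (\<Sum>y\<in>UNIV. \<mu> y t)) = T0"

definition test_fun :: "real \<Rightarrow> ('v \<Rightarrow> real \<Rightarrow> real) \<Rightarrow> ('v \<Rightarrow> real \<Rightarrow> real) \<Rightarrow> bool" where
  "test_fun T0 f f' \<longleftrightarrow>
     (\<forall>y t. f y (t + T0) = f y t)
   \<and> (\<forall>y t. (f y has_real_derivative f' y t) (at t))
   \<and> (\<forall>y. continuous_on UNIV (f' y))"

definition weak_solution :: "real \<Rightarrow> ('v::finite \<Rightarrow> 'v \<Rightarrow> real \<Rightarrow> real) \<Rightarrow> ('v \<Rightarrow> real \<Rightarrow> real) \<Rightarrow> bool" where
  "weak_solution T0 r \<mu> \<longleftrightarrow>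
     (\<forall>f f'. test_fun T0 f f' \<longrightarrow>
        set_integrable lborel {0..T0} (\<lambda>s. \<Sum>y\<in>UNIV. \<mu> y s * f' y s)
      \<and> set_integrable lborel {0..T0} (\<lambda>s. \<Sum>y\<in>UNIV. divQ r \<mu> s y * f y s)
      \<and> (LINT s:{0..T0}|lborel. (\<Sum>y\<in>UNIV. \<mu> y s * f' y s))
          = (LINT s:{0..T0}|lborel. (\<Sum>y\<in>UNIV. divQ r \<mu> s y * f y s)))"

end

theory Submission
  imports Defs
begin



lemma ae_zero_from_intervals:
  fixes k :: "real \<Rightarrow> real"
  assumes int: "set_integrable lborel {0..T} k"
    and z: "\<And>t. t \<in> {0..T} \<Longrightarrow> (LINT s:{0..t}|lborel. k s) = 0"
  shows "AE s in lborel. s \<in> {0..T} \<longrightarrow> k s = 0"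
proof -
  define k0 where "k0 = (\<lambda>s. indicator {0..T} s * k s)"
  have k0i: "integrable lborel k0" using int unfolding k0_def set_integrable_def by simp
  have [measurable]: "k0 \<in> borel_measurable borel" using borel_measurable_integrable[OF k0i] by simp
  have iv: "(LINT s:{x<..}|lborel. k0 s) = 0" for x
  proof -
    consider "x < 0" | "T \<le> x" | "0 \<le> x" "x < T" by linarith
    then show ?thesis
    proof cases
      case 1
      have "(LINT s:{x<..}|lborel. k0 s) = (LINT s:{0..T}|lborel. k s)"
        unfolding set_lebesgue_integral_def k0_def
        by (rule Bochner_Integration.integral_cong) (use 1 in \<open>auto simp: indicator_def\<close>)
      also have "\<dots> = 0"
      proof (cases "0 \<le> T")
        case True then show ?thesis using z[of T] by auto
      next
        case False then show ?thesis by (simp add: set_lebesgue_integral_def)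
      qed
      finally show ?thesis .
    next
      case 2
      have "(LINT s:{x<..}|lborel. k0 s) = (LINT s:{x<..}|lborel. 0)"
        unfolding set_lebesgue_integral_def k0_def
        by (rule Bochner_Integration.integral_cong) (use 2 in \<open>auto simp: indicator_def\<close>)
      then show ?thesis by simp
    next
      case 3
      have a: "(LINT s:{x<..}|lborel. k0 s) = (LINT s:{0..T}|lborel. k s) - (LINT s:{0..x}|lborel. k s)"
      proof -
        have i1: "set_integrable lborel {0..x} k"
          by (rule set_integrable_subset[OF int]) (use 3 in auto)
        have "(LINT s:{0..T}|lborel. k s) = (LINT s:{0..x}|lborel. k s) + (LINT s:{x<..T}|lborel. k s)"
        proof -
          have "{0..T} = {0..x} \<union> {x<..T}" using 3 by auto
          moreover have "{0..x} \<inter> {x<..T} = {}" by auto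
          ultimately show ?thesis
            using set_integral_Un[of "{0..x}" "{x<..T}" lborel k] i1
              set_integrable_subset[OF int, of "{x<..T}"] by auto
        qed
        moreover have "(LINT s:{x<..}|lborel. k0 s) = (LINT s:{x<..T}|lborel. k s)"
          unfolding set_lebesgue_integral_def k0_def
          by (rule Bochner_Integration.integral_cong) (use 3 in \<open>auto simp: indicator_def\<close>)
        ultimately show ?thesis by simp
      qed
      show ?thesis unfolding a using z[of T] z[of x] 3 by auto
    qed
  qed
  define fp where "fp = (\<lambda>s. max 0 (k0 s))"
  define fn where "fn = (\<lambda>s. max 0 (- k0 s))"
  have fpi: "integrable lborel fp" unfolding fp_def using k0i by (intro integrable_max) auto
  have fni: "integrable lborel fn" unfolding fn_def using k0i by (intro integrable_max) auto
  have [measurable]: "fp \<in> borel_measurable borel" "fn \<in> borel_measurable borel"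
    unfolding fp_def fn_def by auto
  have em: "emeasure (density lborel (\<lambda>s. ennreal (f s))) {x<..} = ennreal (LINT s:{x<..}|lborel. f s)"
    if "integrable lborel f" "\<And>s. f s \<ge> 0" "f \<in> borel_measurable borel" for f :: "real \<Rightarrow> real" and x
  proof -
    have "emeasure (density lborel (\<lambda>s. ennreal (f s))) {x<..} = (\<integral>\<^sup>+ s. ennreal (f s) * indicator {x<..} s \<partial>lborel)"
      using that by (subst emeasure_density) auto
    also have "\<dots> = (\<integral>\<^sup>+ s. ennreal (indicator {x<..} s * f s) \<partial>lborel)"
      by (rule nn_integral_cong) (auto simp: indicator_def)
    also have "\<dots> = ennreal (LINT s|lborel. indicator {x<..} s * f s)"
      using that by (intro nn_integral_eq_integral) (auto intro!: integrable_mult_indicator[where 'b=real, simplified])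
    finally show ?thesis by (simp add: set_lebesgue_integral_def)
  qed
  have "density lborel (\<lambda>s. ennreal (fp s)) = density lborel (\<lambda>s. ennreal (fn s))"
  proof (rule measure_eqI_lessThan)
    fix x :: real
    have si: "set_integrable lborel {x<..} fp" "set_integrable lborel {x<..} fn"
      using fpi fni unfolding set_integrable_def
      by (auto intro!: integrable_mult_indicator[where 'b=real, simplified])
    have "(LINT s:{x<..}|lborel. fp s) - (LINT s:{x<..}|lborel. fn s) = (LINT s:{x<..}|lborel. k0 s)"
    proof -
      have "(LINT s:{x<..}|lborel. fp s) - (LINT s:{x<..}|lborel. fn s) = (LINT s:{x<..}|lborel. fp s - fn s)"
        using si by (simp add: set_integral_diff)
      also have "\<dots> = (LINT s:{x<..}|lborel. k0 s)"
        unfolding fp_def fn_def by (rule set_lebesgue_integral_cong) auto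
      finally show ?thesis .
    qed
    then have "(LINT s:{x<..}|lborel. fp s) = (LINT s:{x<..}|lborel. fn s)" using iv[of x] by simp
    then show "emeasure (density lborel (\<lambda>s. ennreal (fp s))) {x<..} = emeasure (density lborel (\<lambda>s. ennreal (fn s))) {x<..}"
      using em[OF fpi] em[OF fni] by (simp add: fp_def fn_def)
    show "emeasure (density lborel (\<lambda>s. ennreal (fp s))) {x<..} < \<infinity>"
      using em[OF fpi, of x] by (simp add: fp_def)
  qed auto
  then have "AE s in lborel. ennreal (fp s) = ennreal (fn s)"
    by (intro sigma_finite_measure.density_unique[OF sigma_finite_lborel]) auto
  then have "AE s in lborel. k0 s = 0"
    by eventually_elim (auto simp: fp_def fn_def max_def split: if_splits)
  then show ?thesis by eventually_elim (auto simp: k0_def)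
qed



lemma integrable_Icc_ind: "integrable lborel (indicat_real {a..(b::real)})"
  by (rule integrable_real_indicator) (auto simp: emeasure_lborel_Icc_eq)

lemma ibp_fubini:
  fixes g \<phi> \<phi>' :: "real \<Rightarrow> real"
  assumes gi: "set_integrable lborel {0..T} g" and T: "0 \<le> T"
    and d: "\<And>t. (\<phi> has_real_derivative \<phi>' t) (at t)" and c: "continuous_on UNIV \<phi>'"
  shows "(LINT t:{0..T}|lborel. g t * \<phi> t) =
     (LINT s:{0..T}|lborel. g s) * \<phi> T - (LINT t:{0..T}|lborel. \<phi>' t * (LINT s:{0..t}|lborel. g s))"
proof -
  define g0 where "g0 = (\<lambda>s. indicator {0..T} s * g s)"
  have g0i: "integrable lborel g0" using gi unfolding g0_def set_integrable_def by simp
  have [measurable]: "g0 \<in> borel_measurable borel" using borel_measurable_integrable[OF g0i] by simp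
  have [measurable]: "g0 \<in> borel_measurable lborel" using borel_measurable_integrable[OF g0i] by simp
  have [measurable]: "\<phi>' \<in> borel_measurable borel" using c by (intro borel_measurable_continuous_onI)
  have [measurable]: "\<phi>' \<in> borel_measurable lborel" using c by (simp add: borel_measurable_continuous_onI)
  have [measurable]: "\<phi> \<in> borel_measurable borel"
    using d by (intro borel_measurable_continuous_onI) (meson DERIV_isCont continuous_at_imp_continuous_on)
  obtain C where C: "\<And>t. t \<in> {0..T} \<Longrightarrow> \<bar>\<phi>' t\<bar> \<le> C"
    using compact_continuous_image[OF continuous_on_subset[OF c] compact_Icc, of 0 T]
    by (metis bounded_iff compact_imp_bounded image_eqI real_norm_def subset_UNIV)
  define F where "F = (\<lambda>t s. indicator {0..T} t * indicator {..t} s * \<phi>' t * g0 s)"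
  have Fm[measurable]: "case_prod F \<in> borel_measurable (lborel \<Otimes>\<^sub>M lborel)"
  proof -
    have [measurable]: "Measurable.pred (lborel \<Otimes>\<^sub>M lborel) (\<lambda>x::real\<times>real. snd x \<in> {..fst x})"
      unfolding atMost_iff by measurable
    show ?thesis unfolding F_def by measurable
  qed
  have Fi: "integrable (lborel \<Otimes>\<^sub>M lborel) (case_prod F)"
  proof (rule lborel_pair.Fubini_integrable)
    show "case_prod F \<in> borel_measurable (lborel \<Otimes>\<^sub>M lborel)" by (rule Fm)
    show "integrable lborel (\<lambda>t. \<integral>s. norm (case_prod F (t, s)) \<partial>lborel)"
    proof (rule Bochner_Integration.integrable_bound)
      show "integrable lborel (\<lambda>t. indicator {0..T} t * (C * (\<integral>s. norm (g0 s) \<partial>lborel)))"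
        unfolding mult.commute[of "indicator {0..T} _"]
        using integrable_Icc_ind by simp
      show "(\<lambda>t. \<integral>s. norm (case_prod F (t, s)) \<partial>lborel) \<in> borel_measurable lborel"
        by (rule lborel.borel_measurable_lebesgue_integral) (simp add: Fm)
      show "AE t in lborel. norm (\<integral>s. norm (case_prod F (t, s)) \<partial>lborel)
          \<le> norm (indicator {0..T} t * (C * (\<integral>s. norm (g0 s) \<partial>lborel)))"
      proof (rule AE_I2)
        fix t :: real
        show "norm (\<integral>s. norm (case_prod F (t, s)) \<partial>lborel)
          \<le> norm (indicator {0..T} t * (C * (\<integral>s. norm (g0 s) \<partial>lborel)))"
        proof (cases "t \<in> {0..T}")
          case True
          have "(\<integral>s. norm (case_prod F (t, s)) \<partial>lborel) \<le> (\<integral>s. C * norm (g0 s) \<partial>lborel)"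
          proof (rule integral_mono)
            show "integrable lborel (\<lambda>s. norm (case_prod F (t, s)))"
            proof -
              have "integrable lborel (\<lambda>s. indicator {..t} s *\<^sub>R norm (g0 s))"
                using g0i by (intro integrable_mult_indicator) auto
              then have "integrable lborel (\<lambda>s. (indicator {0..T} t * \<bar>\<phi>' t\<bar>) * (indicator {..t} s * norm (g0 s)))"
                by simp
              moreover have "(\<lambda>s. norm (case_prod F (t, s))) = (\<lambda>s. (indicator {0..T} t * \<bar>\<phi>' t\<bar>) * (indicator {..t} s * norm (g0 s)))"
                by (auto simp: F_def abs_mult indicator_def fun_eq_iff)
              ultimately show ?thesis by simp
            qed
            show "integrable lborel (\<lambda>s. C * norm (g0 s))" using g0i by auto
            show "norm (case_prod F (t, s)) \<le> C * norm (g0 s)" for s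
              using C[OF True] unfolding F_def
              by (auto simp: abs_mult indicator_def intro!: mult_right_mono)
          qed
          moreover have "0 \<le> C" using C[OF True] by linarith
          ultimately show ?thesis using True by (simp add: integral_nonneg_AE)
        next
          case False
          then show ?thesis unfolding F_def by simp
        qed
      qed
    qed
    show "AE t in lborel. integrable lborel (\<lambda>s. case_prod F (t, s))"
    proof (rule AE_I2)
      fix t
      have "integrable lborel (\<lambda>s. indicator {..t} s *\<^sub>R g0 s)"
        using g0i by (intro integrable_mult_indicator) auto
      then have "integrable lborel (\<lambda>s. (indicator {0..T} t * \<phi>' t) * (indicator {..t} s * g0 s))"
        by simp
      moreover have "(\<lambda>s. case_prod F (t, s)) = (\<lambda>s. (indicator {0..T} t * \<phi>' t) * (indicator {..t} s * g0 s))"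
        by (auto simp: F_def indicator_def fun_eq_iff)
      ultimately show "integrable lborel (\<lambda>s. case_prod F (t, s))" by simp
    qed
  qed
  have eq1: "(\<integral>t. (\<integral>s. F t s \<partial>lborel) \<partial>lborel) = (LINT t:{0..T}|lborel. \<phi>' t * (LINT s:{0..t}|lborel. g s))"
    unfolding set_lebesgue_integral_def[of lborel "{0..T}"]
  proof (rule Bochner_Integration.integral_cong[OF refl])
    fix t
    show "(\<integral>s. F t s \<partial>lborel) = indicator {0..T} t *\<^sub>R (\<phi>' t * (LINT s:{0..t}|lborel. g s))"
    proof (cases "t \<in> {0..T}")
      case True
      have "(\<integral>s. F t s \<partial>lborel) = (\<integral>s. (\<phi>' t) * (indicator {0..t} s * g s) \<partial>lborel)"
        unfolding F_def g0_def
        by (rule Bochner_Integration.integral_cong) (use True in \<open>auto simp: indicator_def\<close>)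
      also have "\<dots> = \<phi>' t * (LINT s:{0..t}|lborel. g s)"
        unfolding set_lebesgue_integral_def by simp
      finally show ?thesis using True by simp
    qed (simp add: F_def)
  qed
  have eq2: "(\<integral>s. (\<integral>t. F t s \<partial>lborel) \<partial>lborel) = (LINT s:{0..T}|lborel. g s * (\<phi> T - \<phi> s))"
    unfolding set_lebesgue_integral_def
  proof (rule Bochner_Integration.integral_cong[OF refl])
    fix s
    show "(\<integral>t. F t s \<partial>lborel) = indicator {0..T} s *\<^sub>R (g s * (\<phi> T - \<phi> s))"
    proof (cases "s \<in> {0..T}")
      case True
      have "(\<integral>t. F t s \<partial>lborel) = (\<integral>t. g s * (\<phi>' t * indicator {s..T} t) \<partial>lborel)"
        unfolding F_def g0_def
        by (rule Bochner_Integration.integral_cong) (use True in \<open>auto simp: indicator_def\<close>)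
      also have "\<dots> = g s * (\<integral>t. \<phi>' t * indicator {s..T} t \<partial>lborel)" by simp
      also have "(\<integral>t. \<phi>' t * indicator {s..T} t \<partial>lborel) = (\<integral>t. indicator {s..T} t *\<^sub>R \<phi>' t \<partial>lborel)"
        by (simp add: mult.commute)
      also have "\<dots> = \<phi> T - \<phi> s"
        using True
      proof (intro integral_FTC_atLeastAtMost continuous_on_subset[OF c])
        fix x assume "s \<le> x" "x \<le> T"
        show "(\<phi> has_vector_derivative \<phi>' x) (at x within {s..T})"
          using d[of x] by (simp add: has_real_derivative_iff_has_vector_derivative[symmetric] has_field_derivative_at_within)
      qed auto
      finally show ?thesis using True by simp
    qed (simp add: F_def g0_def)
  qed
  have "(\<integral>s. (\<integral>t. F t s \<partial>lborel) \<partial>lborel) = (\<integral>t. (\<integral>s. F t s \<partial>lborel) \<partial>lborel)"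
    by (rule lborel_pair.Fubini_integral[OF Fi])
  then have "(LINT s:{0..T}|lborel. g s * (\<phi> T - \<phi> s)) = (LINT t:{0..T}|lborel. \<phi>' t * (LINT s:{0..t}|lborel. g s))"
    using eq1 eq2 by simp
  moreover have "(LINT s:{0..T}|lborel. g s * (\<phi> T - \<phi> s)) = (LINT s:{0..T}|lborel. g s) * \<phi> T - (LINT t:{0..T}|lborel. g t * \<phi> t)"
  proof -
    have i2: "set_integrable lborel {0..T} (\<lambda>s. g s * \<phi> s)"
    proof -
      obtain C2 where C2: "\<And>t. t \<in> {0..T} \<Longrightarrow> \<bar>\<phi> t\<bar> \<le> C2"
        using compact_continuous_image[of "{0..T}" \<phi>] d
        by (metis DERIV_isCont bounded_iff compact_Icc compact_imp_bounded continuous_at_imp_continuous_on image_eqI real_norm_def)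
      show ?thesis
      proof (rule set_integrable_bound[where f="\<lambda>s. C2 * g s"])
      show "set_integrable lborel {0..T} (\<lambda>s. C2 * g s)" using gi by auto
      show "set_borel_measurable lborel {0..T} (\<lambda>s. g s * \<phi> s)"
      proof -
        have "(\<lambda>s. indicator {0..T} s *\<^sub>R g s) \<in> borel_measurable lborel"
          using gi unfolding set_integrable_def by (rule borel_measurable_integrable)
        moreover have "\<phi> \<in> borel_measurable lborel" using \<open>\<phi> \<in> borel_measurable borel\<close> by simp
        ultimately have "(\<lambda>s. (indicator {0..T} s *\<^sub>R g s) * \<phi> s) \<in> borel_measurable lborel"
          by (rule borel_measurable_times)
        then show ?thesis unfolding set_borel_measurable_def by (simp add: mult.assoc)
      qed
      show "AE x in lborel. x \<in> {0..T} \<longrightarrow> norm (g x * \<phi> x) \<le> norm (C2 * g x)"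
      proof (rule AE_I2, rule impI)
        fix x :: real assume "x \<in> {0..T}"
        then have "\<bar>\<phi> x\<bar> \<le> C2" by (rule C2)
        then have "\<bar>g x\<bar> * \<bar>\<phi> x\<bar> \<le> \<bar>g x\<bar> * C2" by (rule mult_left_mono) simp
        moreover have "C2 \<ge> 0" using \<open>\<bar>\<phi> x\<bar> \<le> C2\<close> by linarith
        ultimately show "norm (g x * \<phi> x) \<le> norm (C2 * g x)" by (simp add: abs_mult mult.commute)
      qed
    qed
    qed
    have "(LINT s:{0..T}|lborel. g s * (\<phi> T - \<phi> s)) = (LINT s:{0..T}|lborel. g s * \<phi> T - g s * \<phi> s)"
      by (simp add: algebra_simps)
    also have "\<dots> = (LINT s:{0..T}|lborel. g s * \<phi> T) - (LINT t:{0..T}|lborel. g t * \<phi> t)"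
      using gi i2 by (simp add: set_integral_diff)
    finally show ?thesis by (simp add: set_integral_mult_left)
  qed
  ultimately show ?thesis by linarith
qed



definition prim :: "(real \<Rightarrow> real) \<Rightarrow> real \<Rightarrow> real" where
  "prim g t = integral {0..t} g - integral {t..0} g"

lemma prim_shift:
  assumes c: "continuous_on UNIV g" and "a \<le> 0" "a \<le> t"
  shows "prim g t = integral {a..t} g - integral {a..0} g"
proof -
  have ii: "g integrable_on {u..v}" for u v
    by (rule integrable_continuous_real) (rule continuous_on_subset[OF c], simp)
  show ?thesis
  proof (cases "0 \<le> t")
    case True
    have "integral {a..0} g + integral {0..t} g = integral {a..t} g"
      using Henstock_Kurzweil_Integration.integral_combine[OF \<open>a \<le> 0\<close> True ii] .
    moreover have "integral {t..0} g = 0" using True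
      by (cases "t = 0") auto
    ultimately show ?thesis unfolding prim_def by simp
  next
    case False
    have "integral {a..t} g + integral {t..0} g = integral {a..0} g"
      using Henstock_Kurzweil_Integration.integral_combine[OF \<open>a \<le> t\<close> _ ii] False by simp
    moreover have "integral {0..t} g = 0" using False by simp
    ultimately show ?thesis unfolding prim_def by simp
  qed
qed

lemma prim_deriv:
  assumes c: "continuous_on UNIV g"
  shows "(prim g has_real_derivative g t) (at t)"
proof -
  define a where "a = - \<bar>t\<bar> - 1"
  define b where "b = \<bar>t\<bar> + 1"
  have "((\<lambda>x. integral {a..x} g) has_real_derivative g t) (at t within {a..b})"
  proof (rule integral_has_real_derivative)
    show "continuous_on {a..b} g" using c by (rule continuous_on_subset) simp
    show "t \<in> {a..b}" unfolding a_def b_def by (simp add: abs_if)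
  qed
  moreover have "t \<in> interior {a..b}" unfolding a_def b_def interior_atLeastAtMost_real by (simp add: abs_if)
  ultimately have "((\<lambda>x. integral {a..x} g) has_real_derivative g t) (at t)"
    using at_within_interior by metis
  then have "((\<lambda>x. integral {a..x} g - integral {a..0} g) has_real_derivative g t - 0) (at t)"
    by (rule DERIV_diff) (rule DERIV_const)
  then have "((\<lambda>x. integral {a..x} g - integral {a..0} g) has_real_derivative g t) (at t)" by simp
  then show ?thesis
  proof (rule has_field_derivative_transform_within_open)
    show "open {a<..}" by simp
    show "t \<in> {a<..}" unfolding a_def by (simp add: abs_if)
    show "integral {a..x} g - integral {a..0} g = prim g x" if "x \<in> {a<..}" for x
    proof -
      have "a \<le> 0" "a \<le> x" using that unfolding a_def by auto
      then show ?thesis using prim_shift[OF c, of a x] by simp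
    qed
  qed
qed

lemma prim_nonneg: "0 \<le> t \<Longrightarrow> prim g t = integral {0..t} g"
  by (cases "t = 0") (auto simp: prim_def)

lemma prim_periodic:
  assumes c: "continuous_on UNIV g" and per: "\<And>t. g (t + T) = g t"
    and z: "integral {0..T} g = 0" and T: "T > 0"
  shows "prim g (t + T) = prim g t"
proof -
  have d: "DERIV (\<lambda>t. prim g (t + T) - prim g t) x :> 0" for x
  proof -
    have "DERIV (\<lambda>t. prim g (t + T) - prim g t) x :> g (x + T) * 1 - g x"
    proof (rule DERIV_diff)
      show "DERIV (\<lambda>t. prim g (t + T)) x :> g (x + T) * 1"
        using DERIV_chain2[OF prim_deriv[OF c] DERIV_add[OF DERIV_ident DERIV_const[of T]]] by simp
      show "DERIV (prim g) x :> g x" by (rule prim_deriv[OF c])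
    qed
    then show ?thesis using per by simp
  qed
  have "prim g (t + T) - prim g t = prim g (0 + T) - prim g 0"
    using DERIV_isconst_all[OF allI[OF d]] by blast
  moreover have "prim g T = 0"
    using z T by (simp add: prim_nonneg)
  moreover have "prim g 0 = 0" by (simp add: prim_def)
  ultimately show ?thesis by simp
qed

definition pext :: "real \<Rightarrow> (real \<Rightarrow> real) \<Rightarrow> real \<Rightarrow> real" where
  "pext T ch t = ch (t - T * of_int \<lfloor>t / T\<rfloor>)"

lemma pext_periodic: "T > 0 \<Longrightarrow> pext T ch (t + T) = pext T ch t"
proof -
  assume T: "T > 0"
  have "(t + T) / T = t / T + 1" using T by (simp add: field_simps)
  then have "\<lfloor>(t + T) / T\<rfloor> = \<lfloor>t / T\<rfloor> + 1" by simp
  then show ?thesis unfolding pext_def by (simp add: algebra_simps)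
qed

lemma pext_eq:
  assumes T: "T > 0" and e: "ch 0 = ch T" and t: "t \<in> {of_int n * T..(of_int n + 1) * T}"
  shows "pext T ch t = ch (t - of_int n * T)"
proof (cases "t = (of_int n + 1) * T")
  case True
  then have "t / T = of_int (n + 1)" using T by (simp add: field_simps)
  then have "\<lfloor>t / T\<rfloor> = n + 1" by (metis floor_of_int)
  then show ?thesis unfolding pext_def using True e T by (simp add: algebra_simps)
next
  case False
  then have "of_int n \<le> t / T" "t / T < of_int n + 1" using t T
    by (auto simp: field_simps)
  then have "\<lfloor>t / T\<rfloor> = n" by linarith
  then show ?thesis unfolding pext_def by (simp add: algebra_simps)
qed

lemma pext_on: "T > 0 \<Longrightarrow> ch 0 = ch T \<Longrightarrow> t \<in> {0..T} \<Longrightarrow> pext T ch t = ch t"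
  using pext_eq[of T ch t 0] by simp

lemma pext_cont:
  assumes T: "T > 0" and e: "ch 0 = ch T" and c: "continuous_on {0..T} ch"
  shows "continuous_on UNIV (pext T ch)"
proof -
  have cn: "continuous_on {of_int n * T..(of_int n + 1) * T} (pext T ch)" for n :: int
  proof -
    have "continuous_on {of_int n * T..(of_int n + 1) * T} (\<lambda>t. ch (t - of_int n * T))"
    proof (rule continuous_on_compose2[OF c])
      show "continuous_on {of_int n * T..(of_int n + 1) * T} (\<lambda>t. t - of_int n * T)"
        by (intro continuous_intros)
      show "(\<lambda>t. t - of_int n * T) ` {of_int n * T..(of_int n + 1) * T} \<subseteq> {0..T}"
        by (auto simp: algebra_simps)
    qed
    then show ?thesis
      by (rule continuous_on_eq) (use pext_eq[OF T e] in auto)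
  qed
  have "isCont (pext T ch) t" for t
  proof -
    define n where "n = \<lfloor>t / T\<rfloor>"
    have "of_int n \<le> t / T" "t / T < of_int n + 1" unfolding n_def by linarith+
    then have tn: "of_int n * T \<le> t" "t < (of_int n + 1) * T" using T by (auto simp: field_simps)
    have "continuous_on ({of_int (n - 1) * T..(of_int (n - 1) + 1) * T} \<union> {of_int n * T..(of_int n + 1) * T}) (pext T ch)"
      by (intro continuous_on_closed_Un cn) auto
    moreover have "t \<in> interior ({of_int (n - 1) * T..(of_int (n - 1) + 1) * T} \<union> {of_int n * T..(of_int n + 1) * T})"
    proof -
      have "{of_int (n - 1) * T<..<(of_int n + 1) * T} \<subseteq> {of_int (n - 1) * T..(of_int (n - 1) + 1) * T} \<union> {of_int n * T..(of_int n + 1) * T}"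
        by (auto simp: algebra_simps)
      moreover have "t \<in> {of_int (n - 1) * T<..<(of_int n + 1) * T}" using tn T by (auto simp: algebra_simps)
      ultimately show ?thesis
        using interior_maximal[OF _ open_greaterThanLessThan] by blast
    qed
    ultimately show ?thesis
      using continuous_on_interior by blast
  qed
  then show ?thesis by (simp add: continuous_at_imp_continuous_on)
qed



lemma si_hk:
  fixes f :: "real \<Rightarrow> real"
  assumes "set_integrable lborel {0..T} f" "0 \<le> a" "b \<le> T"
  shows "f integrable_on {a..b}" "(LINT s:{a..b}|lborel. f s) = integral {a..b} f"
proof -
  have "set_integrable lborel {a..b} f"
    by (rule set_integrable_subset[OF assms(1)]) (use assms in auto)
  then show "f integrable_on {a..b}" "(LINT s:{a..b}|lborel. f s) = integral {a..b} f"
    using set_borel_integral_eq_integral by auto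
qed

lemma si_abs_hk:
  assumes "set_integrable lborel {0..T} (f::real\<Rightarrow>real)" "0 \<le> a" "b \<le> T"
  shows "(\<lambda>s. \<bar>f s\<bar>) integrable_on {a..b}"
  using si_hk(1)[OF set_integrable_abs[OF assms(1)] assms(2,3)] .

lemma set_integrable_sum':
  fixes f :: "'i \<Rightarrow> 'a \<Rightarrow> real"
  assumes "finite I" "\<And>i. i \<in> I \<Longrightarrow> set_integrable M A (f i)"
  shows "set_integrable M A (\<lambda>x. \<Sum>i\<in>I. f i x)"
  unfolding set_integrable_def scaleR_sum_right
  by (rule Bochner_Integration.integrable_sum) (use assms in \<open>auto simp: set_integrable_def\<close>)

lemma set_integral_sum':
  fixes f :: "'i \<Rightarrow> 'a \<Rightarrow> real"
  assumes "finite I" "\<And>i. i \<in> I \<Longrightarrow> set_integrable M A (f i)"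
  shows "(LINT x:A|M. (\<Sum>i\<in>I. f i x)) = (\<Sum>i\<in>I. LINT x:A|M. f i x)"
  unfolding set_lebesgue_integral_def scaleR_sum_right
  by (rule Bochner_Integration.integral_sum) (use assms in \<open>auto simp: set_integrable_def\<close>)

lemma ra_r: "rate_assms T0 r \<Longrightarrow> 0 \<le> b \<Longrightarrow> set_integrable lborel {0..b} (r y z)"
  unfolding rate_assms_def by blast
lemma ra_nonneg: "rate_assms T0 r \<Longrightarrow> 0 \<le> t \<Longrightarrow> 0 \<le> r y z t"
  unfolding rate_assms_def by blast
lemma ra_diag: "rate_assms T0 r \<Longrightarrow> r x x t = 0"
  unfolding rate_assms_def by blast

definition Rb :: "('v::finite \<Rightarrow> 'v \<Rightarrow> real \<Rightarrow> real) \<Rightarrow> real \<Rightarrow> real" where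
  "Rb r s = (\<Sum>w\<in>UNIV. \<Sum>y\<in>UNIV. \<bar>gen r s w y\<bar>)"

lemma gen_int:
  assumes "rate_assms T0 r" "0 \<le> b"
  shows "set_integrable lborel {0..b} (\<lambda>s. gen r s y z)"
proof -
  have "set_integrable lborel {0..b} (\<lambda>s. r y z s - (if y = z then (\<Sum>w\<in>UNIV. r y w s) else 0))"
  proof (cases "y = z")
    case True
    then show ?thesis
      using ra_r[OF assms] by (auto intro!: set_integral_diff set_integrable_sum')
  next
    case False
    then show ?thesis using ra_r[OF assms] by simp
  qed
  then show ?thesis unfolding gen_def .
qed

lemma Rb_int: "rate_assms T0 r \<Longrightarrow> 0 \<le> b \<Longrightarrow> set_integrable lborel {0..b} (Rb r)"
  unfolding Rb_def
  by (intro set_integrable_sum' set_integrable_abs gen_int) auto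

lemma Rb_nonneg: "0 \<le> Rb r s"
  unfolding Rb_def by (intro sum_nonneg) auto

lemma gen_abs_le: "\<bar>gen r s w y\<bar> \<le> Rb r s"
proof -
  have "\<bar>gen r s w y\<bar> \<le> (\<Sum>y\<in>UNIV. \<bar>gen r s w y\<bar>)"
    by (rule member_le_sum) auto
  also have "\<dots> \<le> Rb r s" unfolding Rb_def
    by (rule member_le_sum[of _ _ "\<lambda>w. \<Sum>y\<in>UNIV. \<bar>gen r s w y\<bar>"]) (auto intro: sum_nonneg)
  finally show ?thesis .
qed

lemma gen_rowsum: "(\<Sum>z\<in>UNIV. gen r s y (z::'v::finite)) = 0"
  unfolding gen_def by (simp add: sum_subtractf)

lemma gen_off: "y \<noteq> z \<Longrightarrow> gen r s y z = r y z s"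
  unfolding gen_def by simp

lemma gen_diag: "rate_assms T0 r \<Longrightarrow> gen r s z z = - (\<Sum>w\<in>UNIV. r z w s)"
  unfolding gen_def using ra_diag by simp

lemma gen_diag_le: "rate_assms T0 r \<Longrightarrow> 0 \<le> s \<Longrightarrow> gen r s z z \<le> 0"
  using gen_diag[of T0 r s z] ra_nonneg[of T0 r s] by (simp add: sum_nonneg)

definition Fl :: "('v::finite \<Rightarrow> 'v \<Rightarrow> real \<Rightarrow> real) \<Rightarrow> (real \<Rightarrow> 'v \<Rightarrow> real) \<Rightarrow> real \<Rightarrow> 'v \<Rightarrow> real" where
  "Fl r u s z = (\<Sum>y\<in>UNIV. u s y * gen r s y z)"

lemma Fl_bound: "\<bar>Fl r u s z\<bar> \<le> (\<Sum>y\<in>UNIV. \<bar>u s y\<bar>) * Rb r s"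
proof -
  have "\<bar>Fl r u s z\<bar> \<le> (\<Sum>y\<in>UNIV. \<bar>u s y * gen r s y z\<bar>)"
    unfolding Fl_def by (rule sum_abs)
  also have "\<dots> \<le> (\<Sum>y\<in>UNIV. \<bar>u s y\<bar> * Rb r s)"
  proof (rule sum_mono)
    fix y
    have "\<bar>u s y\<bar> * \<bar>gen r s y z\<bar> \<le> \<bar>u s y\<bar> * Rb r s"
      by (rule mult_left_mono[OF gen_abs_le]) simp
    then show "\<bar>u s y * gen r s y z\<bar> \<le> \<bar>u s y\<bar> * Rb r s" by (simp add: abs_mult)
  qed
  finally show ?thesis by (simp add: sum_distrib_right)
qed

definition fwd :: "real \<Rightarrow> ('v::finite \<Rightarrow> 'v \<Rightarrow> real \<Rightarrow> real) \<Rightarrow> (real \<Rightarrow> 'v \<Rightarrow> real) \<Rightarrow> bool" where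
  "fwd T r u \<longleftrightarrow> (\<forall>z. set_integrable lborel {0..T} (\<lambda>s. Fl r u s z))
     \<and> (\<forall>z t. t \<in> {0..T} \<longrightarrow> u t z = u 0 z + (LINT s:{0..t}|lborel. Fl r u s z))"

lemma fwd_int: "fwd T r u \<Longrightarrow> set_integrable lborel {0..T} (\<lambda>s. Fl r u s z)"
  unfolding fwd_def by blast

lemma fwd_eq0:
  assumes "fwd T r u" "0 \<le> t" "t \<le> T"
  shows "u t z = u 0 z + integral {0..t} (\<lambda>s. Fl r u s z)"
proof -
  have "u t z = u 0 z + (LINT s:{0..t}|lborel. Fl r u s z)"
    using assms(1) assms(2,3) unfolding fwd_def atLeastAtMost_iff by blast
  then show ?thesis using si_hk(2)[OF fwd_int[OF assms(1)], of 0 t] assms(2,3) by simp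
qed

lemma fwd_diff:
  assumes "fwd T r u" "0 \<le> a" "a \<le> t" "t \<le> T"
  shows "u t z - u a z = integral {a..t} (\<lambda>s. Fl r u s z)"
proof -
  have i: "(\<lambda>s. Fl r u s z) integrable_on {0..t}"
    using si_hk(1)[OF fwd_int[OF assms(1)], of 0 t] assms by auto
  have "integral {0..a} (\<lambda>s. Fl r u s z) + integral {a..t} (\<lambda>s. Fl r u s z) = integral {0..t} (\<lambda>s. Fl r u s z)"
    by (rule Henstock_Kurzweil_Integration.integral_combine[OF assms(2,3) i])
  moreover have "u t z = u 0 z + integral {0..t} (\<lambda>s. Fl r u s z)"
    by (rule fwd_eq0[OF assms(1)]) (use assms in auto)
  moreover have "u a z = u 0 z + integral {0..a} (\<lambda>s. Fl r u s z)"
    by (rule fwd_eq0[OF assms(1)]) (use assms in auto)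
  ultimately show ?thesis by linarith
qed

lemma fwd_cont:
  assumes "fwd T r u"
  shows "continuous_on {0..T} (\<lambda>t. u t z)"
proof -
  have "continuous_on {0..T} (\<lambda>t. integral {0..t} (\<lambda>s. Fl r u s z))"
  proof (cases "0 \<le> T")
    case True
    then show ?thesis
      by (intro indefinite_integral_continuous_1 si_hk(1)[OF fwd_int[OF assms]]) auto
  qed simp
  then have "continuous_on {0..T} (\<lambda>t. u 0 z + integral {0..t} (\<lambda>s. Fl r u s z))"
    by (intro continuous_intros)
  then show ?thesis
  proof (rule continuous_on_eq)
    fix t assume "t \<in> {0..T}"
    then show "u 0 z + integral {0..t} (\<lambda>s. Fl r u s z) = u t z"
      using fwd_eq0[OF assms, of t z] by simp
  qed
qed

lemma small_int:
  fixes R :: "real \<Rightarrow> real"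
  assumes R: "set_integrable lborel {0..T} R" and e: "e > 0"
  shows "\<exists>d>0. \<forall>a b. 0 \<le> a \<longrightarrow> a \<le> b \<longrightarrow> b \<le> T \<longrightarrow> b - a \<le> d \<longrightarrow> integral {a..b} R \<le> e"
proof (cases "0 \<le> T")
  case False
  show ?thesis
  proof (intro exI[of _ "1::real"] conjI allI impI)
    fix a b :: real assume "0 \<le> a" "a \<le> b" "b \<le> T"
    then show "integral {a..b} R \<le> e" using False by linarith
  qed simp
next
  case True
  have "continuous_on {0..T} (\<lambda>x. integral {0..x} R)"
    by (intro indefinite_integral_continuous_1 si_hk(1)[OF R]) auto
  then have "uniformly_continuous_on {0..T} (\<lambda>x. integral {0..x} R)"
    by (rule compact_uniformly_continuous) simp
  then obtain d where d: "d > 0" "\<And>x x'. x \<in> {0..T} \<Longrightarrow> x' \<in> {0..T} \<Longrightarrow> dist x' x < d \<Longrightarrow>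
      dist (integral {0..x'} R) (integral {0..x} R) < e"
    unfolding uniformly_continuous_on_def using e by metis
  show ?thesis
  proof (intro exI[of _ "d/2"] conjI allI impI)
    show "d / 2 > 0" using d by simp
    fix a b assume ab: "0 \<le> a" "a \<le> b" "b \<le> T" "b - a \<le> d / 2"
    have i: "R integrable_on {0..b}" using si_hk(1)[OF R, of 0 b] ab by auto
    have "integral {0..a} R + integral {a..b} R = integral {0..b} R"
      by (rule Henstock_Kurzweil_Integration.integral_combine[OF ab(1,2) i])
    moreover have "dist (integral {0..b} R) (integral {0..a} R) < e"
      using d(2)[of a b] ab d(1) by (auto simp: dist_real_def)
    ultimately show "integral {a..b} R \<le> e" by (simp add: dist_real_def)
  qed
qed




lemma Rb_hk: "rate_assms T0 r \<Longrightarrow> 0 \<le> a \<Longrightarrow> 0 \<le> b \<Longrightarrow> Rb r integrable_on {a..b}"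
  by (rule si_hk(1)[OF Rb_int[of T0 r b]]) auto

lemma fwd_hk: "fwd T r u \<Longrightarrow> 0 \<le> a \<Longrightarrow> b \<le> T \<Longrightarrow> (\<lambda>s. Fl r u s z) integrable_on {a..b}"
  by (rule si_hk(1)[OF fwd_int])

lemma card_ge1: "real CARD('v::finite) \<ge> 1"
proof -
  have "CARD('v) \<noteq> 0" by simp
  then show ?thesis by linarith
qed

lemma fwd_zero:
  fixes u :: "real \<Rightarrow> 'v::finite \<Rightarrow> real"
  assumes ra: "rate_assms T0 r" and f: "fwd T r u" and T: "0 \<le> T" and z0: "\<And>z. u 0 z = 0"
  shows "\<And>t z. t \<in> {0..T} \<Longrightarrow> u t z = 0"
proof -
  define N where "N = real CARD('v)"
  have N: "N \<ge> 1" unfolding N_def by (rule card_ge1)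
  obtain d where d: "d > 0" "\<And>a b. 0 \<le> a \<Longrightarrow> a \<le> b \<Longrightarrow> b \<le> T \<Longrightarrow> b - a \<le> d \<Longrightarrow> integral {a..b} (Rb r) \<le> 1/(2*N)"
    using small_int[OF Rb_int[OF ra T], of "1/(2*N)"] N by auto
  have step: "\<forall>t\<in>{0..T}. t \<le> real n * d \<longrightarrow> (\<forall>z. u t z = 0)" for n
  proof (induction n)
    case 0 then show ?case using z0 by auto
  next
    case (Suc n)
    show ?case
    proof (intro ballI impI allI)
      fix t z assume t: "t \<in> {0..T}" "t \<le> real (Suc n) * d"
      show "u t z = 0"
      proof (cases "t \<le> real n * d")
        case True then show ?thesis using Suc.IH t by blast
      next
        case False
        define a where "a = real n * d"
        have a: "0 \<le> a" "a < t" "t - a \<le> d" using False t d by (auto simp: a_def algebra_simps)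
        have ua: "u a y = 0" for y using Suc.IH a t unfolding a_def by auto
        define m where "m = (\<lambda>s. \<Sum>y\<in>UNIV. \<bar>u s y\<bar>)"
        have mc: "continuous_on {a..t} m"
          unfolding m_def
          by (intro continuous_intros continuous_on_subset[OF fwd_cont[OF f]]) (use a t in auto)
        obtain x0 where x0: "x0 \<in> {a..t}" "\<And>s. s \<in> {a..t} \<Longrightarrow> m s \<le> m x0"
          using continuous_attains_sup[OF compact_Icc _ mc] a by auto
        define M where "M = m x0"
        have M0: "0 \<le> M" unfolding M_def m_def by (intro sum_nonneg) auto
        have bnd: "\<bar>u s y\<bar> \<le> M/(2*N)" if s: "s \<in> {a..t}" for s y
        proof -
          have "u s y = integral {a..s} (\<lambda>\<sigma>. Fl r u \<sigma> y)"
            using fwd_diff[OF f, of a s y] ua a that t by auto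
          moreover have "norm (integral {a..s} (\<lambda>\<sigma>. Fl r u \<sigma> y)) \<le> integral {a..s} (\<lambda>\<sigma>. M * Rb r \<sigma>)"
          proof (rule Henstock_Kurzweil_Integration.integral_norm_bound_integral)
            show "(\<lambda>\<sigma>. Fl r u \<sigma> y) integrable_on {a..s}" using fwd_hk[OF f] a s t by auto
            show "(\<lambda>\<sigma>. M * Rb r \<sigma>) integrable_on {a..s}"
              using integrable_on_cmult_left[OF Rb_hk[OF ra, of a s]] a s t by auto
            fix \<sigma> assume \<sigma>: "\<sigma> \<in> {a..s}"
            have "\<bar>Fl r u \<sigma> y\<bar> \<le> m \<sigma> * Rb r \<sigma>" unfolding m_def by (rule Fl_bound)
            also have "\<dots> \<le> M * Rb r \<sigma>"
              using x0(2)[of \<sigma>] \<sigma> s by (intro mult_right_mono Rb_nonneg) (auto simp: M_def)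
            finally show "norm (Fl r u \<sigma> y) \<le> M * Rb r \<sigma>" by simp
          qed
          moreover have "integral {a..s} (Rb r) \<le> 1/(2*N)"
            using d(2)[of a s] a s t by auto
          then have "M * integral {a..s} (Rb r) \<le> M * (1/(2*N))"
            using M0 by (rule mult_left_mono)
          ultimately show ?thesis by simp
        qed
        have ms: "m s \<le> M/2" if "s \<in> {a..t}" for s
        proof -
          have "m s \<le> (\<Sum>y\<in>(UNIV::'v set). M/(2*N))" unfolding m_def
            by (rule sum_mono) (rule bnd[OF that])
          also have "\<dots> = M/2" using N by (simp add: N_def)
          finally show ?thesis .
        qed
        have "M \<le> M/2" using ms[OF x0(1)] by (simp add: M_def)
        then have "M = 0" using M0 by linarith
        then show ?thesis using bnd[of t z] a by auto
      qed
    qed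
  qed
  fix t z assume t: "t \<in> {0..T}"
  obtain n where "t < real n * d" using ex_less_of_nat_mult[OF d(1)] by blast
  then show "u t z = 0" using step[of n] t by auto
qed




lemma neg_term: "(u::real) \<ge> - p \<Longrightarrow> 0 \<le> p \<Longrightarrow> 0 \<le> g \<Longrightarrow> g \<le> R \<Longrightarrow> u * g \<ge> - p * R"
proof -
  assume a: "u \<ge> - p" "0 \<le> p" "0 \<le> g" "g \<le> R"
  have "u * g \<ge> - p * g" using a by (intro mult_right_mono) auto
  moreover have "p * g \<le> p * R" using a by (intro mult_left_mono) auto
  ultimately show ?thesis by linarith
qed

lemma Fl_lower:
  assumes ra: "rate_assms T0 r" and s: "0 \<le> \<sigma>" and uy: "u \<sigma> y \<le> 0"
  shows "Fl r u \<sigma> y \<ge> - (\<Sum>w\<in>UNIV. max 0 (- u \<sigma> w)) * Rb r \<sigma>"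
proof -
  have "(\<Sum>w\<in>UNIV. - max 0 (- u \<sigma> w) * Rb r \<sigma>) \<le> Fl r u \<sigma> y"
    unfolding Fl_def
  proof (rule sum_mono)
    fix w
    show "- max 0 (- u \<sigma> w) * Rb r \<sigma> \<le> u \<sigma> w * gen r \<sigma> w y"
    proof (cases "w = y")
      case True
      have "gen r \<sigma> y y \<le> 0" by (rule gen_diag_le[OF ra s])
      then have "0 \<le> u \<sigma> w * gen r \<sigma> w y" using uy True by (simp add: mult_nonpos_nonpos)
      moreover have "0 \<le> max 0 (- u \<sigma> w) * Rb r \<sigma>" by (simp add: Rb_nonneg)
      ultimately show ?thesis by linarith
    next
      case False
      have "0 \<le> gen r \<sigma> w y" using False gen_off[OF False] ra_nonneg[OF ra s] by simp
      moreover have "gen r \<sigma> w y \<le> Rb r \<sigma>" using gen_abs_le[of r \<sigma> w y] by simp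
      ultimately show ?thesis by (intro neg_term) auto
    qed
  qed
  then show ?thesis by (simp add: sum_distrib_right sum_negf)
qed

lemma fwd_nonneg:
  fixes u :: "real \<Rightarrow> 'v::finite \<Rightarrow> real"
  assumes ra: "rate_assms T0 r" and f: "fwd T r u" and T: "0 \<le> T" and z0: "\<And>z. 0 \<le> u 0 z"
  shows "\<And>t z. t \<in> {0..T} \<Longrightarrow> 0 \<le> u t z"
proof -
  define N where "N = real CARD('v)"
  have N: "N \<ge> 1" unfolding N_def by (rule card_ge1)
  obtain d where d: "d > 0" "\<And>a b. 0 \<le> a \<Longrightarrow> a \<le> b \<Longrightarrow> b \<le> T \<Longrightarrow> b - a \<le> d \<Longrightarrow> integral {a..b} (Rb r) \<le> 1/(2*N)"
    using small_int[OF Rb_int[OF ra T], of "1/(2*N)"] N by auto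
  have step: "\<forall>t\<in>{0..T}. t \<le> real n * d \<longrightarrow> (\<forall>z. 0 \<le> u t z)" for n
  proof (induction n)
    case 0 then show ?case using z0 by auto
  next
    case (Suc n)
    show ?case
    proof (intro ballI impI allI)
      fix t z assume t: "t \<in> {0..T}" "t \<le> real (Suc n) * d"
      show "0 \<le> u t z"
      proof (cases "t \<le> real n * d")
        case True then show ?thesis using Suc.IH t by blast
      next
        case False
        define a where "a = real n * d"
        have a: "0 \<le> a" "a < t" "t - a \<le> d" using False t d by (auto simp: a_def algebra_simps)
        have ua: "0 \<le> u a y" for y using Suc.IH a t unfolding a_def by auto
        define m where "m = (\<lambda>s. \<Sum>y\<in>UNIV. max 0 (- u s y))"
        have mc: "continuous_on {a..t} m"
          unfolding m_def
          by (intro continuous_intros continuous_on_subset[OF fwd_cont[OF f]]) (use a t in auto)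
        obtain x0 where x0: "x0 \<in> {a..t}" "\<And>s. s \<in> {a..t} \<Longrightarrow> m s \<le> m x0"
          using continuous_attains_sup[OF compact_Icc _ mc] a by auto
        define M where "M = m x0"
        have M0: "0 \<le> M" unfolding M_def m_def by (intro sum_nonneg) auto
        have bnd: "max 0 (- u s y) \<le> M/(2*N)" if s: "s \<in> {a..t}" for s y
        proof (cases "0 \<le> u s y")
          case True then show ?thesis using M0 N by simp
        next
          case False
          have cy: "continuous_on {a..s} (\<lambda>\<sigma>. u \<sigma> y)"
            by (rule continuous_on_subset[OF fwd_cont[OF f]]) (use a s t in auto)
          define A where "A = {a..s} \<inter> (\<lambda>\<sigma>. u \<sigma> y) -` {0..}"
          have Acl: "closed A" unfolding A_def by (rule continuous_closed_preimage[OF cy]) auto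
          have aA: "a \<in> A" unfolding A_def using ua s by auto
          have Abd: "bdd_above A" unfolding A_def by (rule bdd_aboveI[of _ s]) auto
          define s0 where "s0 = Sup A"
          have s0A: "s0 \<in> A" unfolding s0_def using closed_contains_Sup[OF _ Abd Acl] aA by auto
          have s0: "a \<le> s0" "s0 \<le> s" "0 \<le> u s0 y" using s0A unfolding A_def by auto
          have neg: "u \<sigma> y < 0" if "s0 < \<sigma>" "\<sigma> \<le> s" for \<sigma>
          proof (rule ccontr)
            assume "\<not> u \<sigma> y < 0"
            then have "\<sigma> \<in> A" unfolding A_def using that s0 by auto
            then have "\<sigma> \<le> s0" unfolding s0_def by (rule cSup_upper[OF _ Abd])
            then show False using that by simp
          qed
          have us0: "u s0 y = 0"
          proof -
            have "continuous_on {s0..s} (\<lambda>\<sigma>. u \<sigma> y)"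
              by (rule continuous_on_subset[OF cy]) (use s0 in auto)
            then obtain \<sigma> where \<sigma>: "s0 \<le> \<sigma>" "\<sigma> \<le> s" "u \<sigma> y = 0"
              using IVT2'[of "\<lambda>\<sigma>. u \<sigma> y" s 0 s0] s0 False by auto
            then have "\<sigma> \<in> A" unfolding A_def using s0 by auto
            then have "\<sigma> \<le> s0" unfolding s0_def by (rule cSup_upper[OF _ Abd])
            then show ?thesis using \<sigma> by simp
          qed
          have le0: "u \<sigma> y \<le> 0" if "\<sigma> \<in> {s0..s}" for \<sigma>
            using that neg[of \<sigma>] us0 by (cases "\<sigma> = s0") auto
          have "u s y = integral {s0..s} (\<lambda>\<sigma>. Fl r u \<sigma> y)"
            using fwd_diff[OF f, of s0 s y] us0 s0 a s t by auto
          moreover have "integral {s0..s} (\<lambda>\<sigma>. - M * Rb r \<sigma>) \<le> integral {s0..s} (\<lambda>\<sigma>. Fl r u \<sigma> y)"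
          proof (rule Henstock_Kurzweil_Integration.integral_le)
            show "(\<lambda>\<sigma>. Fl r u \<sigma> y) integrable_on {s0..s}" using fwd_hk[OF f] a s0 s t by auto
            show "(\<lambda>\<sigma>. - M * Rb r \<sigma>) integrable_on {s0..s}"
              using integrable_on_cmult_left[OF Rb_hk[OF ra, of s0 s], of "- M"] a s0 s t by auto
            fix \<sigma> assume \<sigma>: "\<sigma> \<in> {s0..s}"
            have "- m \<sigma> * Rb r \<sigma> \<le> Fl r u \<sigma> y"
            proof -
              have "0 \<le> \<sigma>" using \<sigma> s0 a by auto
              then show ?thesis unfolding m_def using Fl_lower[of T0 r \<sigma> u y] ra le0[OF \<sigma>] by blast
            qed
            moreover have "m \<sigma> \<le> M" using x0(2)[of \<sigma>] \<sigma> s s0 by (auto simp: M_def)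
            then have "- M * Rb r \<sigma> \<le> - m \<sigma> * Rb r \<sigma>"
              using Rb_nonneg[of r \<sigma>] by (simp add: mult_right_mono)
            ultimately show "- M * Rb r \<sigma> \<le> Fl r u \<sigma> y" by linarith
          qed
          moreover have "integral {s0..s} (Rb r) \<le> 1/(2*N)"
            using d(2)[of s0 s] a s0 s t by auto
          then have "M * integral {s0..s} (Rb r) \<le> M * (1/(2*N))"
            using M0 by (rule mult_left_mono)
          ultimately show ?thesis using False by simp
        qed
        have ms: "m s \<le> M/2" if "s \<in> {a..t}" for s
        proof -
          have "m s \<le> (\<Sum>y\<in>(UNIV::'v set). M/(2*N))" unfolding m_def
            by (rule sum_mono) (rule bnd[OF that])
          also have "\<dots> = M/2" using N by (simp add: N_def)
          finally show ?thesis .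
        qed
        have "M \<le> M/2" using ms[OF x0(1)] by (simp add: M_def)
        then have "M = 0" using M0 by linarith
        then show ?thesis using bnd[of t z] a by auto
      qed
    qed
  qed
  fix t z assume t: "t \<in> {0..T}"
  obtain n where "t < real n * d" using ex_less_of_nat_mult[OF d(1)] by blast
  then show "0 \<le> u t z" using step[of n] t by auto
qed




lemma si_mult_cont:
  fixes g \<phi> :: "real \<Rightarrow> real"
  assumes gi: "set_integrable lborel {a..b} g" and c: "continuous_on {a..b} \<phi>"
  shows "set_integrable lborel {a..b} (\<lambda>s. \<phi> s * g s)"
proof -
  obtain C where C: "\<And>t. t \<in> {a..b} \<Longrightarrow> \<bar>\<phi> t\<bar> \<le> C"
    using compact_continuous_image[OF c compact_Icc]
    by (metis bounded_iff compact_imp_bounded image_eqI real_norm_def)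
  show ?thesis
  proof (rule set_integrable_bound[where f="\<lambda>s. C * g s"])
    show "set_integrable lborel {a..b} (\<lambda>s. C * g s)" using gi by auto
    show "set_borel_measurable lborel {a..b} (\<lambda>s. \<phi> s * g s)"
    proof -
      have "(\<lambda>s. indicator {a..b} s *\<^sub>R g s) \<in> borel_measurable lborel"
        using gi unfolding set_integrable_def by (rule borel_measurable_integrable)
      moreover have "(\<lambda>s. indicator {a..b} s *\<^sub>R \<phi> s) \<in> borel_measurable lborel"
        using borel_measurable_continuous_on_indicator[OF _ c] by simp
      ultimately have "(\<lambda>s. (indicator {a..b} s *\<^sub>R \<phi> s) * (indicator {a..b} s *\<^sub>R g s)) \<in> borel_measurable lborel"
        by (rule borel_measurable_times[rotated])
      moreover have "(\<lambda>s. (indicator {a..b} s *\<^sub>R \<phi> s) * (indicator {a..b} s *\<^sub>R g s)) = (\<lambda>s. indicator {a..b} s *\<^sub>R (\<phi> s * g s))"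
        by (auto simp: indicator_def fun_eq_iff)
      ultimately show ?thesis unfolding set_borel_measurable_def by simp
    qed
    show "AE x in lborel. x \<in> {a..b} \<longrightarrow> norm (\<phi> x * g x) \<le> norm (C * g x)"
    proof (rule AE_I2, rule impI)
      fix x :: real assume "x \<in> {a..b}"
      then have "\<bar>\<phi> x\<bar> \<le> C" by (rule C)
      then have "\<bar>\<phi> x\<bar> * \<bar>g x\<bar> \<le> C * \<bar>g x\<bar>" by (rule mult_right_mono) simp
      moreover have "C \<ge> 0" using \<open>\<bar>\<phi> x\<bar> \<le> C\<close> by linarith
      ultimately show "norm (\<phi> x * g x) \<le> norm (C * g x)" by (simp add: abs_mult)
    qed
  qed
qed

lemma set_int_pos:
  fixes g :: "real \<Rightarrow> real"
  assumes gi: "set_integrable lborel {a..b} g" and ab: "a < b"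
    and nn: "\<And>x. x \<in> {a..b} \<Longrightarrow> 0 \<le> g x" and pos: "\<And>x. x \<in> {a<..b} \<Longrightarrow> 0 < g x"
  shows "0 < (LINT x:{a..b}|lborel. g x)"
proof -
  have i: "integrable lborel (\<lambda>x. indicator {a..b} x * g x)" using gi unfolding set_integrable_def by simp
  have ae: "AE x in lborel. 0 \<le> indicator {a..b} x * g x" using nn by (auto simp: indicator_def)
  have ge: "0 \<le> (LINT x:{a..b}|lborel. g x)"
    unfolding set_lebesgue_integral_def using ae by (simp add: integral_nonneg_AE)
  have "(LINT x:{a..b}|lborel. g x) \<noteq> 0"
  proof
    assume "(LINT x:{a..b}|lborel. g x) = 0"
    then have "AE x in lborel. indicator {a..b} x * g x = 0"
      using integral_nonneg_eq_0_iff_AE[OF i ae] unfolding set_lebesgue_integral_def by simp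
    then have "AE x in lborel. x \<notin> {a<..b}"
      by eventually_elim (use pos in \<open>force simp: indicator_def\<close>)
    then have "emeasure lborel {a<..b} = 0"
      by (subst (asm) AE_iff_measurable[of "{a<..b}"]) auto
    then show False using ab by simp
  qed
  then show ?thesis using ge by linarith
qed

lemma Fl_split:
  assumes "y \<noteq> z"
  shows "Fl r u \<sigma> z = u \<sigma> z * gen r \<sigma> z z + u \<sigma> y * gen r \<sigma> y z + (\<Sum>w\<in>UNIV - {z} - {y}. u \<sigma> w * gen r \<sigma> w z)"
proof -
  have "Fl r u \<sigma> z = u \<sigma> z * gen r \<sigma> z z + (\<Sum>w\<in>UNIV - {z}. u \<sigma> w * gen r \<sigma> w z)"
    unfolding Fl_def by (subst sum.remove[of UNIV z]) auto
  also have "(\<Sum>w\<in>UNIV - {z}. u \<sigma> w * gen r \<sigma> w z) = u \<sigma> y * gen r \<sigma> y z + (\<Sum>w\<in>UNIV - {z} - {y}. u \<sigma> w * gen r \<sigma> w z)"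
    using assms by (subst sum.remove[of "UNIV - {z}" y]) auto
  finally show ?thesis by simp
qed

lemma Fl_ge:
  assumes ra: "rate_assms T0 r" and s: "0 \<le> \<sigma>" and nn: "\<And>w. 0 \<le> u \<sigma> w" and yz: "y \<noteq> z"
  shows "Fl r u \<sigma> z \<ge> u \<sigma> z * gen r \<sigma> z z + u \<sigma> y * r y z \<sigma>"
proof -
  have "0 \<le> (\<Sum>w\<in>UNIV - {z} - {y}. u \<sigma> w * gen r \<sigma> w z)"
  proof (rule sum_nonneg)
    fix w assume "w \<in> UNIV - {z} - {y}"
    then have "gen r \<sigma> w z = r w z \<sigma>" by (intro gen_off) auto
    then show "0 \<le> u \<sigma> w * gen r \<sigma> w z" using nn[of w] ra_nonneg[OF ra s] by simp
  qed
  then show ?thesis using Fl_split[OF yz, of r u \<sigma>] gen_off[OF yz] by simp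
qed

lemma Fl_ge_diag:
  assumes ra: "rate_assms T0 r" and s: "0 \<le> \<sigma>" and nn: "\<And>w. 0 \<le> u \<sigma> w"
  shows "Fl r u \<sigma> z \<ge> u \<sigma> z * gen r \<sigma> z z"
proof -
  have "0 \<le> (\<Sum>w\<in>UNIV - {z}. u \<sigma> w * gen r \<sigma> w z)"
  proof (rule sum_nonneg)
    fix w assume "w \<in> UNIV - {z}"
    then have "gen r \<sigma> w z = r w z \<sigma>" by (intro gen_off) auto
    then show "0 \<le> u \<sigma> w * gen r \<sigma> w z" using nn[of w] ra_nonneg[OF ra s] by simp
  qed
  moreover have "Fl r u \<sigma> z = u \<sigma> z * gen r \<sigma> z z + (\<Sum>w\<in>UNIV - {z}. u \<sigma> w * gen r \<sigma> w z)"
    unfolding Fl_def by (subst sum.remove[of UNIV z]) auto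
  ultimately show ?thesis by simp
qed

lemma half_max:
  fixes u :: "real \<Rightarrow> 'v::finite \<Rightarrow> real"
  assumes ra: "rate_assms T0 r" and f: "fwd T r u" and nn: "\<And>t w. t \<in> {0..T} \<Longrightarrow> 0 \<le> u t w"
    and a: "0 \<le> a" "a \<le> t" "t \<le> T" and sm: "integral {a..t} (Rb r) \<le> 1/2"
    and s: "s \<in> {a..t}"
  shows "u s z \<le> 2 * u t z"
proof -
  have cz: "continuous_on {a..t} (\<lambda>s. u s z)"
    by (rule continuous_on_subset[OF fwd_cont[OF f]]) (use a in auto)
  obtain x0 where x0: "x0 \<in> {a..t}" "\<And>s. s \<in> {a..t} \<Longrightarrow> u s z \<le> u x0 z"
    using continuous_attains_sup[OF compact_Icc _ cz] a by auto
  define M where "M = u x0 z"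
  have M0: "0 \<le> M" unfolding M_def using nn x0 a by auto
  have "u t z - u x0 z = integral {x0..t} (\<lambda>\<sigma>. Fl r u \<sigma> z)"
    using fwd_diff[OF f, of x0 t z] x0 a by auto
  moreover have "integral {x0..t} (\<lambda>\<sigma>. - M * Rb r \<sigma>) \<le> integral {x0..t} (\<lambda>\<sigma>. Fl r u \<sigma> z)"
  proof (rule Henstock_Kurzweil_Integration.integral_le)
    show "(\<lambda>\<sigma>. Fl r u \<sigma> z) integrable_on {x0..t}" using fwd_hk[OF f] a x0 by auto
    show "(\<lambda>\<sigma>. - M * Rb r \<sigma>) integrable_on {x0..t}"
      using integrable_on_cmult_left[OF Rb_hk[OF ra, of x0 t], of "- M"] a x0 by auto
    fix \<sigma> assume \<sigma>: "\<sigma> \<in> {x0..t}"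
    have s0: "0 \<le> \<sigma>" "\<sigma> \<in> {0..T}" using \<sigma> x0 a by auto
    have "u \<sigma> z * gen r \<sigma> z z \<le> Fl r u \<sigma> z"
      by (rule Fl_ge_diag[OF ra s0(1)]) (use nn s0 in auto)
    moreover have "- M * Rb r \<sigma> \<le> u \<sigma> z * gen r \<sigma> z z"
    proof -
      have h: "u \<sigma> z \<le> M" "0 \<le> u \<sigma> z" using x0(2)[of \<sigma>] \<sigma> x0 nn s0 by (auto simp: M_def)
      have g: "- Rb r \<sigma> \<le> gen r \<sigma> z z"
        using gen_abs_le[of r \<sigma> z z] by auto
      have h1: "u \<sigma> z * (- Rb r \<sigma>) \<le> u \<sigma> z * gen r \<sigma> z z"
        using g h(2) by (rule mult_left_mono)
      have h2: "u \<sigma> z * Rb r \<sigma> \<le> M * Rb r \<sigma>"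
        using h(1) Rb_nonneg[of r \<sigma>] by (rule mult_right_mono)
      from h1 h2 show ?thesis by simp
    qed
    ultimately show "- M * Rb r \<sigma> \<le> Fl r u \<sigma> z" by linarith
  qed
  moreover have "integral {x0..t} (Rb r) \<le> integral {a..t} (Rb r)"
  proof -
    have i: "Rb r integrable_on {a..t}" using Rb_hk[OF ra, of a t] a by auto
    have "integral {a..x0} (Rb r) + integral {x0..t} (Rb r) = integral {a..t} (Rb r)"
      using Henstock_Kurzweil_Integration.integral_combine[of a x0 t "Rb r"] x0 i by auto
    moreover have "0 \<le> integral {a..x0} (Rb r)"
      by (rule Henstock_Kurzweil_Integration.integral_nonneg)
         (use Rb_hk[OF ra, of a x0] a x0 Rb_nonneg in auto)
    ultimately show ?thesis by linarith
  qed
  then have "M * integral {x0..t} (Rb r) \<le> M * (1/2)" using sm M0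
    by (intro mult_left_mono) auto
  ultimately have "u t z \<ge> M / 2" unfolding M_def by simp
  then show ?thesis using x0(2)[OF s] by (simp add: M_def)
qed




lemma fwd_pos_diag:
  fixes u :: "real \<Rightarrow> 'v::finite \<Rightarrow> real"
  assumes ra: "rate_assms T0 r" and f: "fwd T r u" and T: "0 \<le> T"
    and nn: "\<And>t w. t \<in> {0..T} \<Longrightarrow> 0 \<le> u t w" and p0: "0 < u 0 x"
  shows "\<And>t. t \<in> {0..T} \<Longrightarrow> 0 < u t x"
proof -
  obtain d where d: "d > 0" "\<And>a b. 0 \<le> a \<Longrightarrow> a \<le> b \<Longrightarrow> b \<le> T \<Longrightarrow> b - a \<le> d \<Longrightarrow> integral {a..b} (Rb r) \<le> 1/2"
    using small_int[OF Rb_int[OF ra T], of "1/2"] by auto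
  have step: "\<forall>t\<in>{0..T}. t \<le> real n * d \<longrightarrow> 0 < u t x" for n
  proof (induction n)
    case 0 then show ?case using p0 by auto
  next
    case (Suc n)
    show ?case
    proof (intro ballI impI)
      fix t assume t: "t \<in> {0..T}" "t \<le> real (Suc n) * d"
      show "0 < u t x"
      proof (cases "t \<le> real n * d")
        case True then show ?thesis using Suc.IH t by blast
      next
        case False
        define a where "a = real n * d"
        have a: "0 \<le> a" "a < t" "t - a \<le> d" using False t d by (auto simp: a_def algebra_simps)
        have ua: "0 < u a x" using Suc.IH a t unfolding a_def by auto
        have "u a x \<le> 2 * u t x"
          by (rule half_max[OF ra f nn, where a=a and t=t]) (use a t d(2)[of a t] in auto)
        then show ?thesis using ua by linarith
      qed
    qed
  qed
  fix t assume t: "t \<in> {0..T}"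
  obtain n where "t < real n * d" using ex_less_of_nat_mult[OF d(1)] by blast
  then show "0 < u t x" using step[of n] t by auto
qed

lemma fwd_pos_edge:
  fixes u :: "real \<Rightarrow> 'v::finite \<Rightarrow> real"
  assumes ra: "rate_assms T0 r" and f: "fwd T r u" and T: "0 \<le> T"
    and nn: "\<And>t w. t \<in> {0..T} \<Longrightarrow> 0 \<le> u t w"
    and py: "\<And>t. t \<in> {0<..T} \<Longrightarrow> 0 < u t y" and e: "rate_edge r y z"
  shows "\<And>t. t \<in> {0<..T} \<Longrightarrow> 0 < u t z"
proof -
  obtain d where d: "d > 0" "\<And>a b. 0 \<le> a \<Longrightarrow> a \<le> b \<Longrightarrow> b \<le> T \<Longrightarrow> b - a \<le> d \<Longrightarrow> integral {a..b} (Rb r) \<le> 1/2"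
    using small_int[OF Rb_int[OF ra T], of "1/2"] by auto
  have yz: "y \<noteq> z" and rpos: "\<And>t. 0 < t \<Longrightarrow> 0 < r y z t" using e unfolding rate_edge_def by auto
  fix t assume t: "t \<in> {0<..T}"
  define a where "a = max 0 (t - d)"
  have a: "0 \<le> a" "a < t" "t - a \<le> d" using t d by (auto simp: a_def)
  have hm: "u s z \<le> 2 * u t z" if "s \<in> {a..t}" for s
    using half_max[OF ra f nn, of a t s z] that a t d(2)[of a t] by auto
  show "0 < u t z"
  proof (rule ccontr)
    assume "\<not> 0 < u t z"
    then have ut: "u t z = 0" using nn[of t z] t by auto
    have z0: "u s z = 0" if "s \<in> {a..t}" for s
      using hm[OF that] ut nn[of s z] that a t by auto
    have "u t z - u a z = integral {a..t} (\<lambda>\<sigma>. Fl r u \<sigma> z)"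
      using fwd_diff[OF f, of a t z] a t by auto
    then have i0: "integral {a..t} (\<lambda>\<sigma>. Fl r u \<sigma> z) = 0" using z0[of a] ut a by auto
    have gi: "set_integrable lborel {a..t} (\<lambda>\<sigma>. u \<sigma> y * r y z \<sigma>)"
    proof (rule si_mult_cont)
      show "set_integrable lborel {a..t} (r y z)"
        by (rule set_integrable_subset[OF ra_r[OF ra, of t]]) (use a t in auto)
      show "continuous_on {a..t} (\<lambda>\<sigma>. u \<sigma> y)"
        by (rule continuous_on_subset[OF fwd_cont[OF f]]) (use a t in auto)
    qed
    have "0 < (LINT \<sigma>:{a..t}|lborel. u \<sigma> y * r y z \<sigma>)"
    proof (rule set_int_pos[OF gi a(2)])
      fix x assume "x \<in> {a..t}"
      then show "0 \<le> u x y * r y z x" using nn[of x y] ra_nonneg[OF ra, of x y z] a t by auto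
    next
      fix x assume "x \<in> {a<..t}"
      then show "0 < u x y * r y z x" using py[of x] rpos[of x] a t by auto
    qed
    also have "(LINT \<sigma>:{a..t}|lborel. u \<sigma> y * r y z \<sigma>) = integral {a..t} (\<lambda>\<sigma>. u \<sigma> y * r y z \<sigma>)"
      using set_borel_integral_eq_integral(2)[OF gi] .
    also have "\<dots> \<le> integral {a..t} (\<lambda>\<sigma>. Fl r u \<sigma> z)"
    proof (rule Henstock_Kurzweil_Integration.integral_le)
      show "(\<lambda>\<sigma>. u \<sigma> y * r y z \<sigma>) integrable_on {a..t}" using set_borel_integral_eq_integral(1)[OF gi] .
      show "(\<lambda>\<sigma>. Fl r u \<sigma> z) integrable_on {a..t}" using fwd_hk[OF f] a t by auto
      fix \<sigma> assume \<sigma>: "\<sigma> \<in> {a..t}"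
      have "u \<sigma> z * gen r \<sigma> z z + u \<sigma> y * r y z \<sigma> \<le> Fl r u \<sigma> z"
        by (rule Fl_ge[OF ra _ _ yz]) (use \<sigma> a t nn in auto)
      then show "u \<sigma> y * r y z \<sigma> \<le> Fl r u \<sigma> z" using z0[OF \<sigma>] by simp
    qed
    finally show False using i0 by simp
  qed
qed

lemma fwd_pos_all:
  fixes u :: "real \<Rightarrow> 'v::finite \<Rightarrow> real"
  assumes ra: "rate_assms T0 r" and A2: "rate_A2 r" and f: "fwd T r u" and T: "0 \<le> T"
    and nn: "\<And>t w. t \<in> {0..T} \<Longrightarrow> 0 \<le> u t w" and p0: "0 < u 0 x"
  shows "\<And>t. t \<in> {0<..T} \<Longrightarrow> 0 < u t z"
proof -
  have "(x, z) \<in> {(a, b). rate_edge r a b}\<^sup>*" using A2 unfolding rate_A2_def by blast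
  then show "\<And>t. t \<in> {0<..T} \<Longrightarrow> 0 < u t z"
  proof (induction rule: rtrancl_induct)
    case base
    then show ?case using fwd_pos_diag[OF ra f T nn p0] by auto
  next
    case (step y z)
    then show ?case using fwd_pos_edge[OF ra f T nn, of y z] by auto
  qed
qed



lemma fwd_mass:
  fixes u :: "real \<Rightarrow> 'v::finite \<Rightarrow> real"
  assumes f: "fwd T r u" and t: "t \<in> {0..T}"
  shows "(\<Sum>z\<in>UNIV. u t z) = (\<Sum>z\<in>UNIV. u 0 z)"
proof -
  have ii: "set_integrable lborel {0..t} (\<lambda>s. Fl r u s z)" for z
    by (rule set_integrable_subset[OF fwd_int[OF f]]) (use t in auto)
  have eq: "\<And>z. u t z = u 0 z + (LINT s:{0..t}|lborel. Fl r u s z)"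
    using f t unfolding fwd_def by blast
  have "(\<Sum>z\<in>UNIV. u t z) = (\<Sum>z\<in>UNIV. u 0 z + (LINT s:{0..t}|lborel. Fl r u s z))"
    by (simp only: eq)
  also have "\<dots> = (\<Sum>z\<in>UNIV. u 0 z) + (LINT s:{0..t}|lborel. (\<Sum>z\<in>UNIV. Fl r u s z))"
    by (simp add: sum.distrib set_integral_sum'[OF _ ii])
  also have "(\<lambda>s. \<Sum>z\<in>UNIV. Fl r u s z) = (\<lambda>s. 0)"
  proof
    fix s
    have "(\<Sum>z\<in>UNIV. Fl r u s z) = (\<Sum>z\<in>UNIV. \<Sum>y\<in>UNIV. u s y * gen r s y z)"
      unfolding Fl_def ..
    also have "\<dots> = (\<Sum>y\<in>UNIV. \<Sum>z\<in>UNIV. u s y * gen r s y z)" by (rule sum.swap)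
    also have "\<dots> = (\<Sum>y\<in>UNIV. u s y * (\<Sum>z\<in>UNIV. gen r s y z))" by (simp add: sum_distrib_left)
    also have "\<dots> = 0" by (simp add: gen_rowsum)
    finally show "(\<Sum>z\<in>UNIV. Fl r u s z) = 0" .
  qed
  finally show ?thesis by simp
qed

lemma Fl_lin: "Fl r (\<lambda>t z. \<Sum>x\<in>UNIV. c x * U x t z) s z = (\<Sum>x\<in>UNIV. c x * Fl r (U x) s z)"
proof -
  have "Fl r (\<lambda>t z. \<Sum>x\<in>UNIV. c x * U x t z) s z = (\<Sum>y\<in>UNIV. \<Sum>x\<in>UNIV. c x * U x s y * gen r s y z)"
    unfolding Fl_def by (simp add: sum_distrib_right)
  also have "\<dots> = (\<Sum>x\<in>UNIV. \<Sum>y\<in>UNIV. c x * U x s y * gen r s y z)" by (rule sum.swap)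
  also have "\<dots> = (\<Sum>x\<in>UNIV. c x * Fl r (U x) s z)"
    unfolding Fl_def by (simp add: sum_distrib_left mult.assoc)
  finally show ?thesis .
qed

lemma fwd_sum:
  fixes U :: "'i::finite \<Rightarrow> real \<Rightarrow> 'v::finite \<Rightarrow> real"
  assumes f: "\<And>x. fwd T r (U x)"
  shows "fwd T r (\<lambda>t z. \<Sum>x\<in>UNIV. c x * U x t z)"
  unfolding fwd_def
proof (intro conjI allI impI)
  fix z
  show "set_integrable lborel {0..T} (\<lambda>s. Fl r (\<lambda>t z. \<Sum>x\<in>UNIV. c x * U x t z) s z)"
    unfolding Fl_lin using fwd_int[OF f] by (intro set_integrable_sum') auto
  fix t assume t: "t \<in> {0..T}"
  have ii: "set_integrable lborel {0..t} (\<lambda>s. c x * Fl r (U x) s z)" for x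
    by (rule set_integrable_mult_right, rule set_integrable_subset[OF fwd_int[OF f]]) (use t in auto)
  have eq: "\<And>x. U x t z = U x 0 z + (LINT s:{0..t}|lborel. Fl r (U x) s z)"
    using f t unfolding fwd_def by blast
  have "(\<Sum>x\<in>UNIV. c x * U x t z) = (\<Sum>x\<in>UNIV. c x * (U x 0 z + (LINT s:{0..t}|lborel. Fl r (U x) s z)))"
    by (simp only: eq)
  also have "\<dots> = (\<Sum>x\<in>UNIV. c x * U x 0 z) + (LINT s:{0..t}|lborel. (\<Sum>x\<in>UNIV. c x * Fl r (U x) s z))"
    by (simp add: sum.distrib set_integral_sum'[OF _ ii] distrib_left)
  finally show "(\<Sum>x\<in>UNIV. c x * U x t z) = (\<Sum>x\<in>UNIV. c x * U x 0 z) +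
      (LINT s:{0..t}|lborel. Fl r (\<lambda>t z. \<Sum>x\<in>UNIV. c x * U x t z) s z)"
    unfolding Fl_lin .
qed

lemma Fl_minus: "Fl r (\<lambda>t z. u t z - v t z) s z = Fl r u s z - Fl r v s z"
  unfolding Fl_def by (simp add: sum_subtractf left_diff_distrib)

lemma fwd_minus:
  assumes "fwd T r u" "fwd T r v"
  shows "fwd T r (\<lambda>t z. u t z - v t z)"
  unfolding fwd_def Fl_minus
proof (intro conjI allI impI)
  fix z
  show "set_integrable lborel {0..T} (\<lambda>s. Fl r u s z - Fl r v s z)"
    using fwd_int[OF assms(1)] fwd_int[OF assms(2)] by auto
  fix t assume t: "t \<in> {0..T}"
  have "set_integrable lborel {0..t} (\<lambda>s. Fl r u s z)" "set_integrable lborel {0..t} (\<lambda>s. Fl r v s z)"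
    by (rule set_integrable_subset[OF fwd_int[OF assms(1)]], use t in auto,
        rule set_integrable_subset[OF fwd_int[OF assms(2)]], use t in auto)
  moreover have "u t z = u 0 z + (LINT s:{0..t}|lborel. Fl r u s z)"
    using assms(1) t unfolding fwd_def by blast
  moreover have "v t z = v 0 z + (LINT s:{0..t}|lborel. Fl r v s z)"
    using assms(2) t unfolding fwd_def by blast
  ultimately show "u t z - v t z = u 0 z - v 0 z + (LINT s:{0..t}|lborel. Fl r u s z - Fl r v s z)"
    by (simp add: set_integral_diff)
qed

lemma pf_unique:
  fixes p :: "'v::finite \<Rightarrow> 'v \<Rightarrow> real" and d :: "'v \<Rightarrow> real"
  assumes pos: "\<And>x z. 0 < p x z" and row: "\<And>x. (\<Sum>z\<in>UNIV. p x z) = 1"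
    and inv: "\<And>z. (\<Sum>x\<in>UNIV. d x * p x z) = d z" and s0: "(\<Sum>x\<in>UNIV. d x) = 0"
  shows "d x = 0"
proof (rule ccontr)
  assume dx: "d x \<noteq> 0"
  obtain x1 x2 where x1: "0 < d x1" and x2: "d x2 < 0"
  proof -
    have ex_pos: "\<exists>x1. 0 < d x1"
    proof (rule ccontr)
      assume "\<not> (\<exists>x1. 0 < d x1)"
      then have "\<forall>y\<in>UNIV. 0 \<le> - d y" by (simp add: not_less)
      moreover have "(\<Sum>y\<in>UNIV. - d y) = 0" using s0 by (simp add: sum_negf)
      ultimately have "\<forall>y\<in>UNIV. - d y = 0" using sum_nonneg_eq_0_iff[of UNIV "\<lambda>y. - d y"] by simp
      then show False using dx by simp
    qed
    have ex_neg: "\<exists>x2. d x2 < 0"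
    proof (rule ccontr)
      assume "\<not> (\<exists>x2. d x2 < 0)"
      then have "\<forall>y\<in>UNIV. 0 \<le> d y" by (simp add: not_less)
      then have "\<forall>y\<in>UNIV. d y = 0" using sum_nonneg_eq_0_iff[of UNIV d] s0 by simp
      then show False using dx by simp
    qed
    from ex_pos ex_neg that show ?thesis by blast
  qed
  have strict: "\<bar>d z\<bar> < (\<Sum>x\<in>UNIV. \<bar>d x\<bar> * p x z)" for z
  proof -
    define c where "c x = d x * p x z" for x
    have c1: "0 < c x1" and c2: "c x2 < 0" using x1 x2 pos[of x1 z] pos[of x2 z]
      by (auto simp: c_def mult_neg_pos)
    have ac: "\<bar>c x\<bar> = \<bar>d x\<bar> * p x z" for x using pos[of x z] by (simp add: c_def abs_mult)
    have A: "(\<Sum>x\<in>UNIV. \<bar>c x\<bar> - c x) \<ge> \<bar>c x2\<bar> - c x2"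
      by (rule member_le_sum) auto
    have B: "(\<Sum>x\<in>UNIV. \<bar>c x\<bar> + c x) \<ge> \<bar>c x1\<bar> + c x1"
      by (rule member_le_sum) auto
    have "d z = (\<Sum>x\<in>UNIV. c x)" using inv[of z] by (simp add: c_def)
    moreover have "(\<Sum>x\<in>UNIV. \<bar>c x\<bar> - c x) = (\<Sum>x\<in>UNIV. \<bar>c x\<bar>) - (\<Sum>x\<in>UNIV. c x)"
      by (rule sum_subtractf)
    moreover have "(\<Sum>x\<in>UNIV. \<bar>c x\<bar> + c x) = (\<Sum>x\<in>UNIV. \<bar>c x\<bar>) + (\<Sum>x\<in>UNIV. c x)"
      by (rule sum.distrib)
    moreover have "0 < \<bar>c x2\<bar> - c x2" "0 < \<bar>c x1\<bar> + c x1" using c1 c2 by auto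
    ultimately have "\<bar>d z\<bar> < (\<Sum>x\<in>UNIV. \<bar>c x\<bar>)"
      using A B unfolding abs_less_iff by linarith
    then show ?thesis by (simp add: ac)
  qed
  have "(\<Sum>z\<in>UNIV. \<bar>d z\<bar>) < (\<Sum>z\<in>UNIV. \<Sum>x\<in>UNIV. \<bar>d x\<bar> * p x z)"
    by (rule sum_strict_mono) (auto intro: strict)
  also have "\<dots> = (\<Sum>x\<in>UNIV. \<Sum>z\<in>UNIV. \<bar>d x\<bar> * p x z)"
    by (rule sum.swap)
  also have "\<dots> = (\<Sum>x\<in>UNIV. \<bar>d x\<bar> * (\<Sum>z\<in>UNIV. p x z))"
    by (simp add: sum_distrib_left)
  also have "\<dots> = (\<Sum>x\<in>UNIV. \<bar>d x\<bar>)" by (simp add: row)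
  finally show False by simp
qed




lemma ftc_lint:
  assumes d: "\<And>t. (\<phi> has_real_derivative \<phi>' t) (at t)" and c: "continuous_on UNIV \<phi>'" and ab: "a \<le> b"
  shows "(LINT t:{a..b}|lborel. \<phi>' t) = \<phi> b - \<phi> a"
  unfolding set_lebesgue_integral_def
proof (rule integral_FTC_atLeastAtMost[OF ab])
  fix x assume "a \<le> x" "x \<le> b"
  show "(\<phi> has_vector_derivative \<phi>' x) (at x within {a..b})"
    using d[of x] by (simp add: has_real_derivative_iff_has_vector_derivative[symmetric] has_field_derivative_at_within)
next
  show "continuous_on {a..b} \<phi>'" using c by (rule continuous_on_subset) simp
qed

lemma deriv_cont: "(\<And>t. (\<phi> has_real_derivative \<phi>' t) (at t)) \<Longrightarrow> continuous_on S \<phi>"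
  by (meson DERIV_isCont continuous_at_imp_continuous_on)

lemma weak_const:
  fixes h :: "real \<Rightarrow> real"
  assumes T: "T > 0" and hi: "set_integrable lborel {0..T} h"
    and H: "\<And>\<phi> \<phi>'. (\<And>t. (\<phi> has_real_derivative \<phi>' t) (at t)) \<Longrightarrow> continuous_on UNIV \<phi>' \<Longrightarrow>
              (\<And>t. \<phi> (t + T) = \<phi> t) \<Longrightarrow> (LINT t:{0..T}|lborel. h t * \<phi>' t) = 0"
  shows "\<exists>c. AE t in lborel. t \<in> {0..T} \<longrightarrow> h t = c"
proof -
  define c where "c = (LINT t:{0..T}|lborel. h t) / T"
  define k where "k t = h t - c" for t
  have ci: "set_integrable lborel {0..T} (\<lambda>t. c)"
    by (rule borel_integrable_atLeastAtMost') (rule continuous_on_const)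
  have ki: "set_integrable lborel {0..T} k" unfolding k_def using hi ci by (rule set_integral_diff)
  have lc: "(LINT t:{0..T}|lborel. c) = c * T"
    using si_hk(2)[OF ci, of 0 T] T by simp
  have kint: "(LINT t:{0..T}|lborel. k t) = 0"
    unfolding k_def using hi ci lc T by (simp add: set_integral_diff c_def)
  have Hk: "(LINT t:{0..T}|lborel. k t * \<phi>' t) = 0"
    if d: "\<And>t. (\<phi> has_real_derivative \<phi>' t) (at t)" and cc: "continuous_on UNIV \<phi>'"
       and p: "\<And>t. \<phi> (t + T) = \<phi> t" for \<phi> \<phi>'
  proof -
    have c1: "continuous_on {0..T} \<phi>'" using cc by (rule continuous_on_subset) simp
    have i1: "set_integrable lborel {0..T} (\<lambda>t. h t * \<phi>' t)"
      using si_mult_cont[OF hi c1] by (simp add: mult.commute)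
    have i2: "set_integrable lborel {0..T} (\<lambda>t. c * \<phi>' t)"
      using borel_integrable_atLeastAtMost'[OF c1] by auto
    have "(LINT t:{0..T}|lborel. k t * \<phi>' t) = (LINT t:{0..T}|lborel. h t * \<phi>' t - c * \<phi>' t)"
      unfolding k_def by (simp add: algebra_simps)
    also have "\<dots> = (LINT t:{0..T}|lborel. h t * \<phi>' t) - c * (LINT t:{0..T}|lborel. \<phi>' t)"
      using i1 i2 by (simp add: set_integral_diff)
    also have "(LINT t:{0..T}|lborel. \<phi>' t) = \<phi> T - \<phi> 0"
      by (rule ftc_lint[OF d cc]) (use T in auto)
    also have "\<phi> T = \<phi> 0" using p[of 0] by simp
    finally show ?thesis using H[OF d cc p] by simp
  qed
  define K where "K t = (LINT s:{0..t}|lborel. k s)" for t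
  have Khk: "K t = integral {0..t} k" if "t \<in> {0..T}" for t
    unfolding K_def using si_hk(2)[OF ki, of 0 t] that by auto
  have Kc: "continuous_on {0..T} K"
  proof -
    have "continuous_on {0..T} (\<lambda>t. integral {0..t} k)"
      by (intro indefinite_integral_continuous_1 si_hk(1)[OF ki]) auto
    then show ?thesis by (rule continuous_on_eq) (use Khk in auto)
  qed
  have K0: "K 0 = 0" using Khk[of 0] T by simp
  have KT: "K T = 0" unfolding K_def using kint .
  define mK where "mK = integral {0..T} K / T"
  define ch where "ch t = K t - mK" for t
  have chc: "continuous_on {0..T} ch" unfolding ch_def using Kc by (intro continuous_intros)
  have ch0: "ch 0 = ch T" unfolding ch_def using K0 KT by simp
  have Ki: "K integrable_on {0..T}" using Kc by (rule integrable_continuous_real)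
  have chint: "integral {0..T} ch = 0"
  proof -
    have "integral {0..T} ch = integral {0..T} K - integral {0..T} (\<lambda>t. mK)"
      unfolding ch_def by (rule Henstock_Kurzweil_Integration.integral_diff[OF Ki]) (rule integrable_const_ivl)
    then show ?thesis using T by (simp add: mK_def)
  qed
  define g1 where "g1 = pext T ch"
  have g1c: "continuous_on UNIV g1" unfolding g1_def by (rule pext_cont[OF T ch0 chc])
  have g1p: "g1 (t + T) = g1 t" for t unfolding g1_def by (rule pext_periodic[OF T])
  have g1e: "g1 t = ch t" if "t \<in> {0..T}" for t unfolding g1_def by (rule pext_on[OF T ch0 that])
  have g1int: "integral {0..T} g1 = 0"
    using chint by (subst integral_cong[of _ g1 ch]) (auto simp: g1e)
  define \<psi> where "\<psi> = prim g1"
  have \<psi>d: "(\<psi> has_real_derivative g1 t) (at t)" for t unfolding \<psi>_def by (rule prim_deriv[OF g1c])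
  have \<psi>p: "\<psi> (t + T) = \<psi> t" for t unfolding \<psi>_def by (rule prim_periodic[OF g1c g1p g1int T])
  have \<psi>c: "continuous_on UNIV \<psi>" by (rule deriv_cont[OF \<psi>d])
  define m\<psi> where "m\<psi> = integral {0..T} \<psi> / T"
  define g2 where "g2 t = \<psi> t - m\<psi>" for t
  have g2c: "continuous_on UNIV g2" unfolding g2_def using \<psi>c by (intro continuous_intros)
  have g2p: "g2 (t + T) = g2 t" for t unfolding g2_def using \<psi>p by simp
  have g2d: "(g2 has_real_derivative g1 t) (at t)" for t
    unfolding g2_def using DERIV_diff[OF \<psi>d DERIV_const[of m\<psi>]] by simp
  have g2int: "integral {0..T} g2 = 0"
  proof -
    have "\<psi> integrable_on {0..T}"
      by (rule integrable_continuous_real) (rule continuous_on_subset[OF \<psi>c], simp)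
    then have "integral {0..T} g2 = integral {0..T} \<psi> - integral {0..T} (\<lambda>t. m\<psi>)"
      unfolding g2_def by (rule Henstock_Kurzweil_Integration.integral_diff) (rule integrable_const_ivl)
    then show ?thesis using T by (simp add: m\<psi>_def)
  qed
  define \<phi> where "\<phi> = prim g2"
  have \<phi>d: "(\<phi> has_real_derivative g2 t) (at t)" for t unfolding \<phi>_def by (rule prim_deriv[OF g2c])
  have \<phi>p: "\<phi> (t + T) = \<phi> t" for t unfolding \<phi>_def by (rule prim_periodic[OF g2c g2p g2int T])
  have A: "(LINT t:{0..T}|lborel. k t * g2 t) = 0" by (rule Hk[OF \<phi>d g2c \<phi>p])
  have B: "(LINT t:{0..T}|lborel. k t * g2 t) = (LINT s:{0..T}|lborel. k s) * g2 T - (LINT t:{0..T}|lborel. g1 t * K t)"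
    unfolding K_def by (rule ibp_fubini[OF ki _ g2d g1c]) (use T in simp)
  have C: "(LINT t:{0..T}|lborel. g1 t * K t) = 0" using A B kint by simp
  have gK: "continuous_on {0..T} (\<lambda>t. g1 t * K t)"
  proof (rule continuous_on_mult[OF _ Kc])
    show "continuous_on {0..T} g1" by (rule continuous_on_subset[OF g1c]) simp
  qed
  have D: "integral {0..T} (\<lambda>t. ch t * K t) = 0"
  proof -
    have "(LINT t:{0..T}|lborel. g1 t * K t) = integral {0..T} (\<lambda>t. g1 t * K t)"
      using si_hk(2)[OF borel_integrable_atLeastAtMost'[OF gK], of 0 T] by simp
    also have "\<dots> = integral {0..T} (\<lambda>t. ch t * K t)"
      by (rule integral_cong) (simp add: g1e)
    finally show ?thesis using C by simp
  qed
  have E: "integral {0..T} (\<lambda>t. ch t * ch t) = 0"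
  proof -
    have i1: "(\<lambda>t. ch t * K t) integrable_on {0..T}"
      by (rule integrable_continuous_real) (rule continuous_on_mult[OF chc Kc])
    have i2: "(\<lambda>t. ch t * mK) integrable_on {0..T}"
      by (rule integrable_continuous_real) (rule continuous_on_mult[OF chc continuous_on_const])
    have "integral {0..T} (\<lambda>t. ch t * ch t) = integral {0..T} (\<lambda>t. ch t * K t - ch t * mK)"
      unfolding ch_def by (simp add: algebra_simps)
    also have "\<dots> = integral {0..T} (\<lambda>t. ch t * K t) - integral {0..T} (\<lambda>t. ch t * mK)"
      by (rule Henstock_Kurzweil_Integration.integral_diff[OF i1 i2])
    also have "integral {0..T} (\<lambda>t. ch t * mK) = integral {0..T} ch * mK" by simp
    finally show ?thesis using D chint by simp
  qed
  have "\<forall>t\<in>{0..T}. ch t * ch t = 0"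
  proof -
    have "continuous_on {0..T} (\<lambda>t. ch t * ch t)" by (rule continuous_on_mult[OF chc chc])
    then show ?thesis using integral_eq_0_iff[of 0 T "\<lambda>t. ch t * ch t"] E T by simp
  qed
  then have chz: "ch t = 0" if "t \<in> {0..T}" for t using that by auto
  have "mK = 0" using chz[of 0] K0 T unfolding ch_def by simp
  then have Kz: "K t = 0" if "t \<in> {0..T}" for t using chz[OF that] unfolding ch_def by simp
  have "AE s in lborel. s \<in> {0..T} \<longrightarrow> k s = 0"
    by (rule ae_zero_from_intervals[OF ki]) (use Kz in \<open>auto simp: K_def\<close>)
  then have "AE s in lborel. s \<in> {0..T} \<longrightarrow> h s = c"
    by eventually_elim (auto simp: k_def)
  then show ?thesis by blast
qed




lemma sum_if_eq: "(\<Sum>y'\<in>UNIV. a y' * (if y' = (y::'v::finite) then b else 0)) = (a y * b :: real)"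
proof -
  have "(\<Sum>y'\<in>UNIV. a y' * (if y' = y then b else 0)) = (\<Sum>y'\<in>UNIV. if y' = y then a y' * b else 0)"
    by (rule sum.cong) auto
  also have "\<dots> = a y * b" by simp
  finally show ?thesis .
qed

lemma divQ_Fl: "divQ r \<mu> s y = - Fl r (\<lambda>t z. \<mu> z t) s y"
proof -
  have "Fl r (\<lambda>t z. \<mu> z t) s y = (\<Sum>w\<in>UNIV. \<mu> w s * r w y s) - (\<Sum>w\<in>UNIV. \<mu> w s * (if w = y then \<Sum>v\<in>UNIV. r w v s else 0))"
    unfolding Fl_def gen_def by (simp add: right_diff_distrib sum_subtractf)
  also have "(\<Sum>w\<in>UNIV. \<mu> w s * (if w = y then \<Sum>v\<in>UNIV. r w v s else 0)) = (\<Sum>w\<in>UNIV. if w = y then \<mu> y s * (\<Sum>v\<in>UNIV. r y v s) else 0)"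
    by (rule sum.cong) auto
  also have "\<dots> = \<mu> y s * (\<Sum>v\<in>UNIV. r y v s)" by simp
  finally show ?thesis unfolding divQ_def by (simp add: sum_distrib_left)
qed

lemma lint_cong_AE:
  fixes f g :: "real \<Rightarrow> real"
  assumes "set_integrable M A f" "set_integrable M A g" "AE x in M. x \<in> A \<longrightarrow> f x = g x"
  shows "(LINT x:A|M. f x) = (LINT x:A|M. g x)"
  unfolding set_lebesgue_integral_def
proof (rule integral_cong_AE)
  show "(\<lambda>x. indicator A x *\<^sub>R f x) \<in> borel_measurable M"
    using assms(1) unfolding set_integrable_def by (rule borel_measurable_integrable)
  show "(\<lambda>x. indicator A x *\<^sub>R g x) \<in> borel_measurable M"
    using assms(2) unfolding set_integrable_def by (rule borel_measurable_integrable)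
  show "AE x in M. indicator A x *\<^sub>R f x = indicator A x *\<^sub>R g x"
    using assms(3) by eventually_elim (auto simp: indicator_def)
qed

lemma lint_point: "(LINT s:{0..0::real}|lborel. (f s :: real)) = 0"
proof -
  have "AE x in lborel. indicator {0..0::real} x *\<^sub>R f x = 0"
    using AE_lborel_singleton[of 0] by eventually_elim (auto simp: indicator_def)
  then show ?thesis unfolding set_lebesgue_integral_def by (rule integral_eq_zero_AE)
qed

lemma has_deriv_if: "(\<And>t. (\<phi> has_real_derivative \<phi>' t) (at t)) \<Longrightarrow>
   ((\<lambda>t. if b then \<phi> t else 0) has_real_derivative (if b then \<phi>' t else 0)) (at t)"
  by (cases b) auto

lemma test_fun_single:
  assumes d: "\<And>t. (\<phi> has_real_derivative \<phi>' t) (at t)" and c: "continuous_on UNIV \<phi>'"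
    and p: "\<And>t. \<phi> (t + T) = \<phi> t"
  shows "test_fun T (\<lambda>y' t. if y' = y then \<phi> t else 0) (\<lambda>y' t. if y' = y then \<phi>' t else 0)"
  unfolding test_fun_def
proof (intro conjI allI)
  fix y' t
  show "(if y' = y then \<phi> (t + T) else 0) = (if y' = y then \<phi> t else 0)" using p by simp
  show "((\<lambda>t. if y' = y then \<phi> t else 0) has_real_derivative (if y' = y then \<phi>' t else 0)) (at t)"
    by (rule has_deriv_if[OF d])
next
  fix y'
  show "continuous_on UNIV (\<lambda>t. if y' = y then \<phi>' t else 0)" using c by (cases "y' = y") auto
qed




lemma P0: "is_transition_from0 r P \<Longrightarrow> P 0 x z = (if x = z then 1 else 0)"
proof -
  assume "is_transition_from0 r P"
  then have "P 0 x z = (if x = z then 1 else 0) + (LINT s:{0..0}|lborel. (\<Sum>y\<in>UNIV. P s x y * gen r s y z))"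
    unfolding is_transition_from0_def by blast
  then show ?thesis by (simp only: lint_point)
qed

lemma P_fwd:
  assumes tr: "is_transition_from0 r P" and T: "0 \<le> T"
  shows "fwd T r (\<lambda>t z. P t x z)"
  unfolding fwd_def Fl_def
proof (intro conjI allI impI)
  fix z show "set_integrable lborel {0..T} (\<lambda>s. \<Sum>y\<in>UNIV. P s x y * gen r s y z)"
    using tr T unfolding is_transition_from0_def by blast
  fix t assume t: "t \<in> {0..T}"
  have "P t x z = (if x = z then 1 else 0) + (LINT s:{0..t}|lborel. \<Sum>y\<in>UNIV. P s x y * gen r s y z)"
    using tr t unfolding is_transition_from0_def atLeastAtMost_iff by blast
  then show "P t x z = P 0 x z + (LINT s:{0..t}|lborel. \<Sum>y\<in>UNIV. P s x y * gen r s y z)"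
    by (simp only: P0[OF tr])
qed

lemma sum_delta_r: "(\<Sum>x\<in>UNIV. c x * (if x = (z::'v::finite) then 1 else 0)) = (c z :: real)"
  using sum_if_eq[of c z 1] by simp

lemma exist_part:
  fixes T0 :: real and r :: "'v::finite \<Rightarrow> 'v \<Rightarrow> real \<Rightarrow> real"
  assumes ra: "rate_assms T0 r" and tr: "is_transition_from0 r P"
    and nn0: "\<forall>x. 0 \<le> \<pi>0 x" and s1: "(\<Sum>x\<in>UNIV. \<pi>0 x) = 1"
    and inv: "\<forall>z. (\<Sum>x\<in>UNIV. \<pi>0 x * P T0 x z) = \<pi>0 z"
  shows "in_M_plus T0 (\<lambda>y t. \<Sum>x\<in>UNIV. \<pi>0 x * P t x y) \<and> weak_solution T0 r (\<lambda>y t. \<Sum>x\<in>UNIV. \<pi>0 x * P t x y)"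
proof -
  have T: "0 < T0" using ra unfolding rate_assms_def by simp
  define pih where "pih = (\<lambda>t z. \<Sum>x\<in>UNIV. \<pi>0 x * P t x z)"
  have pf: "fwd T0 r pih"
    unfolding pih_def using fwd_sum[of T0 r "\<lambda>x t z. P t x z" \<pi>0] P_fwd[OF tr] T by simp
  have p0: "pih 0 z = \<pi>0 z" for z unfolding pih_def P0[OF tr] by (rule sum_delta_r)
  have pT: "pih T0 z = pih 0 z" for z using inv p0 unfolding pih_def by simp
  have pnn: "0 \<le> pih t z" if "t \<in> {0..T0}" for t z
    by (rule fwd_nonneg[OF ra pf _ _ that]) (use T p0 nn0 in auto)
  have pc: "continuous_on {0..T0} (\<lambda>t. pih t z)" for z by (rule fwd_cont[OF pf])
  have pmass: "(\<Sum>z\<in>UNIV. pih t z) = 1" if "t \<in> {0..T0}" for t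
    using fwd_mass[OF pf that] p0 s1 by simp
  have "(\<lambda>y t. \<Sum>x\<in>UNIV. \<pi>0 x * P t x y) = (\<lambda>y t. pih t y)" unfolding pih_def by simp
  moreover have "in_M_plus T0 (\<lambda>y t. pih t y)"
    unfolding in_M_plus_def
  proof (intro conjI allI impI)
    fix y
    show "set_borel_measurable lborel {0..T0} (\<lambda>t. pih t y)"
      unfolding set_borel_measurable_def
      using borel_measurable_continuous_on_indicator[OF _ pc[of y]] by simp
    show "set_integrable lborel {0..T0} (\<lambda>t. pih t y)"
      by (rule borel_integrable_atLeastAtMost'[OF pc])
  next
    fix y t assume "t \<in> {0..T0}" then show "0 \<le> pih t y" by (rule pnn)
  next
    have "(LINT t:{0..T0}|lborel. (\<Sum>y\<in>UNIV. pih t y)) = (LINT t:{0..T0}|lborel. 1)"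
      by (rule set_lebesgue_integral_cong) (auto simp: pmass)
    also have "\<dots> = T0"
    proof -
      have "set_integrable lborel {0..T0} (\<lambda>t. 1::real)"
        by (rule borel_integrable_atLeastAtMost'[OF continuous_on_const])
      from si_hk(2)[OF this, of 0 T0] T show ?thesis by simp
    qed
    finally show "(LINT t:{0..T0}|lborel. (\<Sum>y\<in>UNIV. pih t y)) = T0" .
  qed
  moreover have "weak_solution T0 r (\<lambda>y t. pih t y)"
    unfolding weak_solution_def
  proof (intro allI impI)
    fix f f' :: "'v \<Rightarrow> real \<Rightarrow> real"
    assume tf: "test_fun T0 f f'"
    have fp: "f y (t + T0) = f y t" for y t using tf unfolding test_fun_def by blast
    have fd: "(f y has_real_derivative f' y t) (at t)" for y t using tf unfolding test_fun_def by blast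
    have fc: "continuous_on UNIV (f' y)" for y using tf unfolding test_fun_def by blast
    have fc0: "continuous_on {0..T0} (f' y)" for y using fc by (rule continuous_on_subset) simp
    have ffc: "continuous_on {0..T0} (f y)" for y using fd by (rule deriv_cont)
    have i1: "set_integrable lborel {0..T0} (\<lambda>s. pih s y * f' y s)" for y
      by (rule borel_integrable_atLeastAtMost') (intro continuous_on_mult pc fc0)
    have Fi: "set_integrable lborel {0..T0} (\<lambda>s. Fl r pih s y)" for y by (rule fwd_int[OF pf])
    have dq: "divQ r (\<lambda>y t. pih t y) s y = - Fl r pih s y" for s y
      using divQ_Fl[of r "\<lambda>y t. pih t y" s y] by simp
    have i2: "set_integrable lborel {0..T0} (\<lambda>s. divQ r (\<lambda>y t. pih t y) s y * f y s)" for y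
    proof -
      have "set_integrable lborel {0..T0} (\<lambda>s. f y s * Fl r pih s y)"
        by (rule si_mult_cont[OF Fi ffc])
      then have "set_integrable lborel {0..T0} (\<lambda>s. - (f y s * Fl r pih s y))"
        using set_integrable_mult_right[where a="-1" and M=lborel and A="{0..T0}"] by simp
      then show ?thesis unfolding dq by (simp add: mult.commute)
    qed
    have eqy: "(LINT s:{0..T0}|lborel. divQ r (\<lambda>y t. pih t y) s y * f y s) = (LINT s:{0..T0}|lborel. pih s y * f' y s)" for y
    proof -
      have ib: "(LINT t:{0..T0}|lborel. Fl r pih t y * f y t) =
          (LINT s:{0..T0}|lborel. Fl r pih s y) * f y T0 - (LINT t:{0..T0}|lborel. f' y t * (LINT s:{0..t}|lborel. Fl r pih s y))"
        by (rule ibp_fubini[OF Fi _ fd fc]) (use T in simp)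
      have G: "(LINT s:{0..t}|lborel. Fl r pih s y) = pih t y - pih 0 y" if "t \<in> {0..T0}" for t
      proof -
        have "pih t y = pih 0 y + (LINT s:{0..t}|lborel. Fl r pih s y)"
          using pf that unfolding fwd_def by blast
        then show ?thesis by simp
      qed
      have "(LINT t:{0..T0}|lborel. f' y t * (LINT s:{0..t}|lborel. Fl r pih s y)) =
            (LINT t:{0..T0}|lborel. pih t y * f' y t - pih 0 y * f' y t)"
        by (rule set_lebesgue_integral_cong) (auto simp: G algebra_simps)
      also have "\<dots> = (LINT t:{0..T0}|lborel. pih t y * f' y t) - pih 0 y * (LINT t:{0..T0}|lborel. f' y t)"
        using i1 borel_integrable_atLeastAtMost'[OF fc0] by (simp add: set_integral_diff)
      also have "(LINT t:{0..T0}|lborel. f' y t) = f y T0 - f y 0"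
        by (rule ftc_lint[OF fd fc]) (use T in simp)
      also have "f y T0 = f y 0" using fp[of y 0] by simp
      finally have X: "(LINT t:{0..T0}|lborel. f' y t * (LINT s:{0..t}|lborel. Fl r pih s y)) = (LINT t:{0..T0}|lborel. pih t y * f' y t)"
        by simp
      have Y: "(LINT s:{0..T0}|lborel. Fl r pih s y) = 0" using G[of T0] pT T by simp
      have "(LINT s:{0..T0}|lborel. divQ r (\<lambda>y t. pih t y) s y * f y s) = - (LINT t:{0..T0}|lborel. Fl r pih t y * f y t)"
        unfolding dq by (simp add: set_lebesgue_integral_def)
      then show ?thesis using ib X Y by simp
    qed
    have A: "set_integrable lborel {0..T0} (\<lambda>s. \<Sum>y\<in>UNIV. pih s y * f' y s)"
      using i1 by (intro set_integrable_sum') auto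
    have B: "set_integrable lborel {0..T0} (\<lambda>s. \<Sum>y\<in>UNIV. divQ r (\<lambda>y t. pih t y) s y * f y s)"
      using i2 by (intro set_integrable_sum') auto
    have C: "(LINT s:{0..T0}|lborel. \<Sum>y\<in>UNIV. pih s y * f' y s) =
          (LINT s:{0..T0}|lborel. \<Sum>y\<in>UNIV. divQ r (\<lambda>y t. pih t y) s y * f y s)"
      using eqy by (simp add: set_integral_sum'[OF _ i1] set_integral_sum'[OF _ i2])
    show "set_integrable lborel {0..T0} (\<lambda>s. \<Sum>y\<in>UNIV. pih s y * f' y s) \<and>
      set_integrable lborel {0..T0} (\<lambda>s. \<Sum>y\<in>UNIV. divQ r (\<lambda>y t. pih t y) s y * f y s) \<and>
      (LINT s:{0..T0}|lborel. \<Sum>y\<in>UNIV. pih s y * f' y s) =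
          (LINT s:{0..T0}|lborel. \<Sum>y\<in>UNIV. divQ r (\<lambda>y t. pih t y) s y * f y s)"
      using A B C by blast
  qed
  ultimately show ?thesis by simp
qed




lemma uniq_part:
  fixes T0 :: real and r :: "'v::finite \<Rightarrow> 'v \<Rightarrow> real \<Rightarrow> real" and \<mu> :: "'v \<Rightarrow> real \<Rightarrow> real"
  assumes ra: "rate_assms T0 r" and A2: "rate_A2 r" and tr: "is_transition_from0 r P"
    and nn0: "\<forall>x. 0 \<le> \<pi>0 x" and s1: "(\<Sum>x\<in>UNIV. \<pi>0 x) = 1"
    and inv: "\<forall>z. (\<Sum>x\<in>UNIV. \<pi>0 x * P T0 x z) = \<pi>0 z"
    and mu: "in_M_plus T0 \<mu>" and ws: "weak_solution T0 r \<mu>"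
  shows "AE t in lborel. t \<in> {0..T0} \<longrightarrow> (\<forall>y. \<mu> y t = (\<Sum>x\<in>UNIV. \<pi>0 x * P t x y))"
proof -
  have T: "0 < T0" using ra unfolding rate_assms_def by simp
  define muh where "muh = (\<lambda>t z. \<mu> z t)"
  have \<mu>i: "set_integrable lborel {0..T0} (\<mu> y)" for y using mu unfolding in_M_plus_def by blast
  have mass: "(LINT t:{0..T0}|lborel. (\<Sum>y\<in>UNIV. \<mu> y t)) = T0" using mu unfolding in_M_plus_def by blast
  define dd where "dd y s = divQ r \<mu> s y" for y s
  have wsf: "set_integrable lborel {0..T0} (\<lambda>s. \<Sum>y\<in>UNIV. \<mu> y s * f' y s)
      \<and> set_integrable lborel {0..T0} (\<lambda>s. \<Sum>y\<in>UNIV. divQ r \<mu> s y * f y s)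
      \<and> (LINT s:{0..T0}|lborel. (\<Sum>y\<in>UNIV. \<mu> y s * f' y s))
          = (LINT s:{0..T0}|lborel. (\<Sum>y\<in>UNIV. divQ r \<mu> s y * f y s))"
    if "test_fun T0 f f'" for f f' using ws that unfolding weak_solution_def by blast
  have single: "set_integrable lborel {0..T0} (\<lambda>s. dd y s * \<phi> s) \<and>
      (LINT s:{0..T0}|lborel. \<mu> y s * \<phi>' s) = (LINT s:{0..T0}|lborel. dd y s * \<phi> s)"
    if d: "\<And>t. (\<phi> has_real_derivative \<phi>' t) (at t)" and c: "continuous_on UNIV \<phi>'"
      and p: "\<And>t. \<phi> (t + T0) = \<phi> t" for y \<phi> \<phi>'
  proof -
    have e1: "(\<lambda>s. \<Sum>y'\<in>UNIV. \<mu> y' s * (if y' = y then \<phi>' s else 0)) = (\<lambda>s. \<mu> y s * \<phi>' s)"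
      by (rule ext, rule sum_if_eq)
    have e2: "(\<lambda>s. \<Sum>y'\<in>UNIV. divQ r \<mu> s y' * (if y' = y then \<phi> s else 0)) = (\<lambda>s. dd y s * \<phi> s)"
      unfolding dd_def by (rule ext, rule sum_if_eq)
    show ?thesis using wsf[OF test_fun_single[OF d c p, of y]] unfolding e1 e2 by blast
  qed
  have ddi: "set_integrable lborel {0..T0} (dd y)" and dd0: "(LINT s:{0..T0}|lborel. dd y s) = 0" for y
  proof -
    have "((\<lambda>t. 1::real) has_real_derivative 0) (at t)" for t by simp
    from single[OF this _ refl, of y] show "set_integrable lborel {0..T0} (dd y)" "(LINT s:{0..T0}|lborel. dd y s) = 0"
      by auto
  qed
  define D where "D y t = (LINT s:{0..t}|lborel. dd y s)" for y t
  have Dhk: "D y t = integral {0..t} (dd y)" if "t \<in> {0..T0}" for y t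
    unfolding D_def using si_hk(2)[OF ddi, of 0 t] that by auto
  have Dc: "continuous_on {0..T0} (D y)" for y
  proof -
    have "continuous_on {0..T0} (\<lambda>t. integral {0..t} (dd y))"
      by (intro indefinite_integral_continuous_1 si_hk(1)[OF ddi]) auto
    then show ?thesis by (rule continuous_on_eq) (use Dhk in auto)
  qed
  have Di: "set_integrable lborel {0..T0} (D y)" for y by (rule borel_integrable_atLeastAtMost'[OF Dc])
  have "\<exists>c. AE t in lborel. t \<in> {0..T0} \<longrightarrow> \<mu> y t + D y t = c" for y
  proof (rule weak_const[OF T])
    show "set_integrable lborel {0..T0} (\<lambda>t. \<mu> y t + D y t)" using \<mu>i Di by (rule set_integral_add)
    fix \<phi> \<phi>' assume d: "\<And>t. (\<phi> has_real_derivative \<phi>' t) (at t)" and c: "continuous_on UNIV \<phi>'"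
      and p: "\<And>t. \<phi> (t + T0) = \<phi> t"
    have c0: "continuous_on {0..T0} \<phi>'" using c by (rule continuous_on_subset) simp
    have i1: "set_integrable lborel {0..T0} (\<lambda>t. \<mu> y t * \<phi>' t)"
      using si_mult_cont[OF \<mu>i c0] by (simp add: mult.commute)
    have i2: "set_integrable lborel {0..T0} (\<lambda>t. D y t * \<phi>' t)"
      using si_mult_cont[OF Di c0] by (simp add: mult.commute)
    have ib: "(LINT t:{0..T0}|lborel. dd y t * \<phi> t) =
        (LINT s:{0..T0}|lborel. dd y s) * \<phi> T0 - (LINT t:{0..T0}|lborel. \<phi>' t * D y t)"
      unfolding D_def by (rule ibp_fubini[OF ddi _ d c]) (use T in simp)
    have "(LINT t:{0..T0}|lborel. (\<mu> y t + D y t) * \<phi>' t) = (LINT t:{0..T0}|lborel. \<mu> y t * \<phi>' t + D y t * \<phi>' t)"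
      by (simp add: algebra_simps)
    also have "\<dots> = (LINT t:{0..T0}|lborel. \<mu> y t * \<phi>' t) + (LINT t:{0..T0}|lborel. D y t * \<phi>' t)"
      using i1 i2 by (simp add: set_integral_add)
    also have "(LINT t:{0..T0}|lborel. \<mu> y t * \<phi>' t) = (LINT t:{0..T0}|lborel. dd y t * \<phi> t)"
      using single[OF d c p, of y] by blast
    finally show "(LINT t:{0..T0}|lborel. (\<mu> y t + D y t) * \<phi>' t) = 0"
      using ib dd0[of y] by (simp add: mult.commute)
  qed
  then obtain c where c: "\<And>y. AE t in lborel. t \<in> {0..T0} \<longrightarrow> \<mu> y t + D y t = c y" by metis
  define \<nu> where "\<nu> t y = c y - D y t" for t y
  have AEall: "AE t in lborel. t \<in> {0..T0} \<longrightarrow> (\<forall>y. \<mu> y t = \<nu> t y)"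
  proof -
    have "AE t in lborel. \<forall>y\<in>UNIV. t \<in> {0..T0} \<longrightarrow> \<mu> y t + D y t = c y"
      by (rule AE_finite_allI) (use c in auto)
    then show ?thesis by eventually_elim (auto simp: \<nu>_def algebra_simps)
  qed
  have \<nu>c: "continuous_on {0..T0} (\<lambda>t. \<nu> t y)" for y
    unfolding \<nu>_def using Dc by (intro continuous_intros)
  have Flm: "Fl r muh s y = - dd y s" for s y
    unfolding dd_def muh_def using divQ_Fl[of r \<mu> s y] by simp
  have Fl\<nu>i: "set_integrable lborel {0..T0} (\<lambda>s. Fl r \<nu> s y)" for y
    unfolding Fl_def
    by (intro set_integrable_sum' si_mult_cont[OF gen_int[OF ra] \<nu>c]) (use T in auto)
  have Fli: "set_integrable lborel {0..T0} (\<lambda>s. Fl r muh s y)" for y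
    unfolding Flm using ddi[of y] set_integrable_mult_right[where a="-1" and M=lborel and A="{0..T0}"] by simp
  have AEF: "AE s in lborel. s \<in> {0..T0} \<longrightarrow> Fl r \<nu> s y = Fl r muh s y" for y
    using AEall by eventually_elim (auto simp: Fl_def muh_def)
  have D0: "D y 0 = 0" for y unfolding D_def lint_point ..
  have \<nu>0: "\<nu> 0 y = c y" for y unfolding \<nu>_def D0 by simp
  have f\<nu>: "fwd T0 r \<nu>"
    unfolding fwd_def
  proof (intro conjI allI impI)
    fix z show "set_integrable lborel {0..T0} (\<lambda>s. Fl r \<nu> s z)" by (rule Fl\<nu>i)
    fix t assume t: "t \<in> {0..T0}"
    have s1: "set_integrable lborel {0..t} (\<lambda>s. Fl r \<nu> s z)"
      by (rule set_integrable_subset[OF Fl\<nu>i]) (use t in auto)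
    have s2: "set_integrable lborel {0..t} (\<lambda>s. Fl r muh s z)"
      by (rule set_integrable_subset[OF Fli]) (use t in auto)
    have "(LINT s:{0..t}|lborel. Fl r \<nu> s z) = (LINT s:{0..t}|lborel. Fl r muh s z)"
      by (rule lint_cong_AE[OF s1 s2]) (use AEF[of z] t in \<open>eventually_elim, auto\<close>)
    also have "\<dots> = - D z t" unfolding Flm D_def by (simp add: set_lebesgue_integral_def)
    finally show "\<nu> t z = \<nu> 0 z + (LINT s:{0..t}|lborel. Fl r \<nu> s z)"
      by (simp add: D0 \<nu>_def)
  qed
  have \<nu>T: "\<nu> T0 y = \<nu> 0 y" for y unfolding \<nu>_def D0 using dd0[of y] by (simp add: D_def)
  have \<nu>mass: "(\<Sum>y\<in>UNIV. \<nu> 0 y) = 1"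
  proof -
    have si: "set_integrable lborel {0..T0} (\<lambda>t. \<Sum>y\<in>UNIV. \<mu> y t)" using \<mu>i by (intro set_integrable_sum') auto
    have sc: "continuous_on {0..T0} (\<lambda>t. \<Sum>y\<in>UNIV. \<nu> t y)" using \<nu>c by (intro continuous_intros)
    have "(LINT t:{0..T0}|lborel. (\<Sum>y\<in>UNIV. \<mu> y t)) = (LINT t:{0..T0}|lborel. (\<Sum>y\<in>UNIV. \<nu> t y))"
      by (rule lint_cong_AE[OF si borel_integrable_atLeastAtMost'[OF sc]]) (use AEall in \<open>eventually_elim, auto\<close>)
    also have "\<dots> = (LINT t:{0..T0}|lborel. (\<Sum>y\<in>UNIV. \<nu> 0 y))"
      by (rule set_lebesgue_integral_cong) (auto intro: fwd_mass[OF f\<nu>])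
    also have "\<dots> = T0 * (\<Sum>y\<in>UNIV. \<nu> 0 y)"
    proof -
      have "set_integrable lborel {0..T0} (\<lambda>t. (\<Sum>y\<in>UNIV. \<nu> 0 y))"
        by (rule borel_integrable_atLeastAtMost'[OF continuous_on_const])
      from si_hk(2)[OF this, of 0 T0] T show ?thesis by simp
    qed
    finally show ?thesis using mass T by simp
  qed
  have Pf: "fwd T0 r (\<lambda>t z. P t x z)" for x by (rule P_fwd[OF tr]) (use T in simp)
  have Pnn: "0 \<le> P t x z" if "t \<in> {0..T0}" for t x z
    by (rule fwd_nonneg[OF ra Pf _ _ that]) (use T P0[OF tr] in auto)
  have Ppos: "0 < P T0 x z" for x z
    by (rule fwd_pos_all[OF ra A2 Pf _ Pnn, of x]) (use T P0[OF tr] in auto)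
  have Prow: "(\<Sum>z\<in>UNIV. P T0 x z) = 1" for x
    using fwd_mass[OF Pf, of T0 x] T by (simp add: P0[OF tr])
  define w where "w t z = \<nu> t z - (\<Sum>x\<in>UNIV. \<nu> 0 x * P t x z)" for t z
  have fw: "fwd T0 r w"
    unfolding w_def by (rule fwd_minus[OF f\<nu> fwd_sum[OF Pf]])
  have w0: "w 0 z = 0" for z unfolding w_def P0[OF tr] by (simp add: sum_delta_r)
  have \<nu>P: "\<nu> t z = (\<Sum>x\<in>UNIV. \<nu> 0 x * P t x z)" if "t \<in> {0..T0}" for t z
    using fwd_zero[OF ra fw _ w0 that] T unfolding w_def by simp
  have d0: "\<nu> 0 x - \<pi>0 x = 0" for x
  proof (rule pf_unique[of "P T0"])
    show "0 < P T0 x z" for x z by (rule Ppos)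
    show "(\<Sum>z\<in>UNIV. P T0 x z) = 1" for x by (rule Prow)
    show "(\<Sum>x\<in>UNIV. (\<nu> 0 x - \<pi>0 x) * P T0 x z) = \<nu> 0 z - \<pi>0 z" for z
    proof -
      have "(\<Sum>x\<in>UNIV. (\<nu> 0 x - \<pi>0 x) * P T0 x z) = (\<Sum>x\<in>UNIV. \<nu> 0 x * P T0 x z) - (\<Sum>x\<in>UNIV. \<pi>0 x * P T0 x z)"
        by (simp add: left_diff_distrib sum_subtractf)
      also have "\<dots> = \<nu> T0 z - \<pi>0 z" using \<nu>P[of T0 z] inv T by simp
      finally show ?thesis using \<nu>T by simp
    qed
    show "(\<Sum>x\<in>UNIV. \<nu> 0 x - \<pi>0 x) = 0" using \<nu>mass s1 by (simp add: sum_subtractf)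
  qed
  show ?thesis
    using AEall
  proof eventually_elim
    case (elim t)
    show ?case
    proof (intro impI allI)
      fix y assume t: "t \<in> {0..T0}"
      have "\<mu> y t = \<nu> t y" using elim t by blast
      also have "\<dots> = (\<Sum>x\<in>UNIV. \<pi>0 x * P t x y)" using \<nu>P[OF t, of y] d0 by simp
      finally show "\<mu> y t = (\<Sum>x\<in>UNIV. \<pi>0 x * P t x y)" .
    qed
  qed
qed



theorem proposition7p5:
  fixes T0 :: real
    and r :: "'v::finite \<Rightarrow> 'v \<Rightarrow> real \<Rightarrow> real"
    and P :: "real \<Rightarrow> 'v \<Rightarrow> 'v \<Rightarrow> real"
    and \<pi>0 :: "'v \<Rightarrow> real"
  assumes "rate_assms T0 r" and "rate_A1 r" and "rate_A2 r"
    and "is_transition_from0 r P"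
    and "\<forall>x. 0 \<le> \<pi>0 x" and "(\<Sum>x\<in>UNIV. \<pi>0 x) = 1"
    and "\<forall>z. (\<Sum>x\<in>UNIV. \<pi>0 x * P T0 x z) = \<pi>0 z"
  defines "\<pi> \<equiv> (\<lambda>y t. \<Sum>x\<in>UNIV. \<pi>0 x * P t x y)"
  shows "in_M_plus T0 \<pi> \<and> weak_solution T0 r \<pi>
    \<and> (\<forall>\<mu>. in_M_plus T0 \<mu> \<and> weak_solution T0 r \<mu> \<longrightarrow>
           (AE t in lborel. t \<in> {0..T0} \<longrightarrow> (\<forall>y. \<mu> y t = \<pi> y t)))"
proof -
  have E: "in_M_plus T0 \<pi> \<and> weak_solution T0 r \<pi>"
    unfolding \<pi>_def by (rule exist_part[OF assms(1) assms(4) assms(5) assms(6) assms(7)])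
  have U: "\<forall>\<mu>. in_M_plus T0 \<mu> \<and> weak_solution T0 r \<mu> \<longrightarrow>
           (AE t in lborel. t \<in> {0..T0} \<longrightarrow> (\<forall>y. \<mu> y t = \<pi> y t))"
    unfolding \<pi>_def using uniq_part[OF assms(1) assms(3) assms(4) assms(5) assms(6) assms(7)] by blast
  from E U show ?thesis by blast
qed

end
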